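(* Let $X$ be a real Banach space and $f:X\to\mathbb{R}\cup\{+\infty\}$ proper, convex and lsc. Assume $\mathrm{int}(\mathrm{dom}\, f)\neq\varnothing$, $\mathrm{dom}(Df^* )\neq\varnothing$, and $F_{\partial f}(x,x^* )=f(x)+f^*(x^* )$ for all $(x,x^* )\in\mathrm{dom}\, f\times\mathrm{dom}\, f^*$. Let $\mathcal{Z}=\mathrm{Im}(Df^* )$, $K=\overline{\mathrm{conv}}(\mathcal{Z})$, $\mathcal{V}=\overline{\mathrm{conv}}^{w^*}\big(\bigcup_{x\in\mathrm{int}(\mathrm{dom}\, f)}\partial f(x)\big)$ and $\widehat{N}=\bigcup_{\widehat{x}\in K}N_{\mathrm{dom}\, f}(\widehat{x})$. Then \[ \mathrm{dom}(Df^* )\subseteq\partial f(K) = \mathcal{V}+\widehat{N}\subseteq\mathrm{dom}\, f^*, \] where $\partial f(K)=\bigcup_{\widehat{x}\in K}\partial f(\widehat{x})$.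
   Context: $f^*$ is the Fenchel conjugate; $\mathrm{dom}(Df^* )$ is the set of points of $X^*$ at which $f^*$ is Fréchet differentiable, where $Df^*(v^* )\in X$; $\mathrm{Im}(Df^* )$ is the set of these derivatives. $\overline{\mathrm{conv}}$ and $\overline{\mathrm{conv}}^{w^*}$ are the closed and weak$^*$-closed convex hulls. $N_{\mathrm{dom}\, f}(\widehat{x})$ is the normal cone to $\mathrm{dom}\, f$ at $\widehat{x}$. $F_{\partial f}(x,x^* )=\sup_{(y,y^* )\in\mathrm{Gr}(\partial f)}\{\langle y,x^*\rangle+\langle x,y^*\rangle-\langle y,y^*\rangle\}$. *)

theory Defs
  imports "HOL-Analysis.Analysis"
begin

definition edom :: "('a \<Rightarrow> ereal) \<Rightarrow> 'a set" where
  "edom f = {x. f x < \<infinity>}"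

definition proper_fun :: "('a \<Rightarrow> ereal) \<Rightarrow> bool" where
  "proper_fun f \<longleftrightarrow> (\<forall>x. f x \<noteq> -\<infinity>) \<and> (\<exists>x. f x \<noteq> \<infinity>)"

definition epigraph_e :: "('a \<Rightarrow> ereal) \<Rightarrow> ('a \<times> real) set" where
  "epigraph_e f = {(x, r). f x \<le> ereal r}"

definition convex_fun :: "('a::real_vector \<Rightarrow> ereal) \<Rightarrow> bool" where
  "convex_fun f \<longleftrightarrow> convex (epigraph_e f)"

definition lsc_fun :: "('a::topological_space \<Rightarrow> ereal) \<Rightarrow> bool" where
  "lsc_fun f \<longleftrightarrow> closed (epigraph_e f)"

definition fconj :: "('a::real_normed_vector \<Rightarrow> ereal) \<Rightarrow> ('a \<Rightarrow>\<^sub>L real) \<Rightarrow> ereal" where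
  "fconj f v = (SUP x. ereal (blinfun_apply v x) - f x)"

definition subdiff :: "('a::real_normed_vector \<Rightarrow> ereal) \<Rightarrow> 'a \<Rightarrow> ('a \<Rightarrow>\<^sub>L real) set" where
  "subdiff f x = {v. f x \<noteq> \<infinity> \<and> f x \<noteq> -\<infinity> \<and>
      (\<forall>y. f y \<ge> f x + ereal (blinfun_apply v (y - x)))}"

definition subdiff_graph :: "('a::real_normed_vector \<Rightarrow> ereal) \<Rightarrow> ('a \<times> ('a \<Rightarrow>\<^sub>L real)) set" where
  "subdiff_graph f = {(x, v). v \<in> subdiff f x}"

definition fitzpatrick_subdiff :: "('a::real_normed_vector \<Rightarrow> ereal) \<Rightarrow> 'a \<Rightarrow> ('a \<Rightarrow>\<^sub>L real) \<Rightarrow> ereal" where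
  "fitzpatrick_subdiff f x v = (SUP p \<in> subdiff_graph f.
      ereal (blinfun_apply v (fst p) + blinfun_apply (snd p) x - blinfun_apply (snd p) (fst p)))"

text \<open>Fr\'echet derivative of f* at v is the point x \<in> X: f* is finite near v and
  its (real) Fr\'echet derivative at v is the functional h \<mapsto> h(x).\<close>
definition conj_frechet_deriv :: "('a::real_normed_vector \<Rightarrow> ereal) \<Rightarrow> ('a \<Rightarrow>\<^sub>L real) \<Rightarrow> 'a \<Rightarrow> bool" where
  "conj_frechet_deriv f v x \<longleftrightarrow>
     (\<forall>\<^sub>F w in nhds v. fconj f w \<noteq> \<infinity> \<and> fconj f w \<noteq> -\<infinity>) \<and>
     ((\<lambda>w. real_of_ereal (fconj f w)) has_derivative (\<lambda>h. blinfun_apply h x)) (at v)"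

definition dom_Dconj :: "('a::real_normed_vector \<Rightarrow> ereal) \<Rightarrow> ('a \<Rightarrow>\<^sub>L real) set" where
  "dom_Dconj f = {v. \<exists>x. conj_frechet_deriv f v x}"

definition im_Dconj :: "('a::real_normed_vector \<Rightarrow> ereal) \<Rightarrow> 'a set" where
  "im_Dconj f = {x. \<exists>v. conj_frechet_deriv f v x}"

definition weak_star_topology :: "('a::real_normed_vector \<Rightarrow>\<^sub>L real) topology" where
  "weak_star_topology = topology_generated_by
     {{w. blinfun_apply w x \<in> U} | x U. open U}"

definition weak_star_closed_convex_hull :: "('a::real_normed_vector \<Rightarrow>\<^sub>L real) set \<Rightarrow> ('a \<Rightarrow>\<^sub>L real) set" where
  "weak_star_closed_convex_hull S =
     \<Inter>{C. convex C \<and> closedin weak_star_topology C \<and> S \<subseteq> C}"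

text \<open>Normal cone (empty at points outside C).\<close>
definition normal_cone :: "'a::real_normed_vector set \<Rightarrow> 'a \<Rightarrow> ('a \<Rightarrow>\<^sub>L real) set" where
  "normal_cone C x = {v. x \<in> C \<and> (\<forall>y\<in>C. blinfun_apply v (y - x) \<le> 0)}"

end

theory Submission
  imports Defs "HOL-Analysis.Analysis"
begin

definition sublin :: "('b::real_vector \<Rightarrow> real) \<Rightarrow> bool" where
  "sublin p \<longleftrightarrow> (\<forall>x y. p (x + y) \<le> p x + p y) \<and> (\<forall>c x. c \<ge> 0 \<longrightarrow> p (c *\<^sub>R x) = c * p x)"

lemma sublin_add: "sublin p \<Longrightarrow> p (x + y) \<le> p x + p y"
  unfolding sublin_def by blast

lemma sublin_scale: "sublin p \<Longrightarrow> c \<ge> 0 \<Longrightarrow> p (c *\<^sub>R x) = c * p x"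
  unfolding sublin_def by blast

lemma sublin_0: "sublin p \<Longrightarrow> p 0 = 0"
  using sublin_scale[of p 0 0] by simp

lemma sublin_neg: assumes "sublin p" shows "- p (-x) \<le> p x"
proof -
  have "p 0 \<le> p x + p (-x)" using sublin_add[OF assms, of x "-x"] by simp
  then show ?thesis using sublin_0[OF assms] by simp
qed

definition shiftf :: "('b::real_vector \<Rightarrow> real) \<Rightarrow> 'b \<Rightarrow> 'b \<Rightarrow> real" where
  "shiftf p y d = Inf ((\<lambda>t. p (d + t *\<^sub>R y) - t * p y) ` {0..})"

lemma shiftf_bdd:
  assumes "sublin p"
  shows "bdd_below ((\<lambda>t. p (d + t *\<^sub>R y) - t * p y) ` {0..})"
proof (rule bdd_belowI2[where m="- p (-d)"])
  fix t :: real assume "t \<in> {0..}"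
  then have t: "t \<ge> 0" by simp
  have "p (t *\<^sub>R y) \<le> p (d + t *\<^sub>R y) + p (-d)"
    using sublin_add[OF assms, of "d + t *\<^sub>R y" "-d"] by simp
  then show "- p (-d) \<le> p (d + t *\<^sub>R y) - t * p y"
    using sublin_scale[OF assms t] by simp
qed

lemma shiftf_le:
  assumes "sublin p" "t \<ge> 0"
  shows "shiftf p y d \<le> p (d + t *\<^sub>R y) - t * p y"
  unfolding shiftf_def using assms by (intro cInf_lower shiftf_bdd) auto

lemma shiftf_ge:
  assumes "\<And>t. t \<ge> 0 \<Longrightarrow> c \<le> p (d + t *\<^sub>R y) - t * p y"
  shows "c \<le> shiftf p y d"
  unfolding shiftf_def using assms by (intro cInf_greatest) auto

lemma shiftf_sublin:
  assumes p: "sublin p"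
  shows "sublin (shiftf p y)"
  unfolding sublin_def
proof (intro conjI allI impI)
  fix d1 d2
  have base: "shiftf p y (d1 + d2) \<le> (p (d1 + t1 *\<^sub>R y) - t1 * p y) + (p (d2 + t2 *\<^sub>R y) - t2 * p y)"
    if "t1 \<ge> 0" "t2 \<ge> 0" for t1 t2
  proof -
    have "shiftf p y (d1 + d2) \<le> p (d1 + d2 + (t1 + t2) *\<^sub>R y) - (t1 + t2) * p y"
      using shiftf_le[OF p, of "t1 + t2"] that by simp
    also have "p (d1 + d2 + (t1 + t2) *\<^sub>R y) \<le> p (d1 + t1 *\<^sub>R y) + p (d2 + t2 *\<^sub>R y)"
      using sublin_add[OF p, of "d1 + t1 *\<^sub>R y" "d2 + t2 *\<^sub>R y"]
      by (simp add: algebra_simps)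
    finally show ?thesis by (simp add: algebra_simps)
  qed
  have "shiftf p y (d1 + d2) - (p (d2 + t2 *\<^sub>R y) - t2 * p y) \<le> shiftf p y d1" if "t2 \<ge> 0" for t2
  proof (rule shiftf_ge)
    fix t :: real assume "t \<ge> 0"
    from base[OF this that] show "shiftf p y (d1 + d2) - (p (d2 + t2 *\<^sub>R y) - t2 * p y) \<le> p (d1 + t *\<^sub>R y) - t * p y" by simp
  qed
  then have "shiftf p y (d1 + d2) - shiftf p y d1 \<le> shiftf p y d2"
    by (intro shiftf_ge) force
  then show "shiftf p y (d1 + d2) \<le> shiftf p y d1 + shiftf p y d2" by simp
next
  fix c :: real and d assume c: "c \<ge> 0"
  show "shiftf p y (c *\<^sub>R d) = c * shiftf p y d"
  proof (cases "c = 0")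
    case True
    have "shiftf p y 0 \<le> 0" using shiftf_le[OF p, of 0 y 0] sublin_0[OF p] by simp
    moreover have "0 \<le> shiftf p y 0"
      by (rule shiftf_ge) (simp add: sublin_scale[OF p])
    ultimately show ?thesis using True by simp
  next
    case False
    with c have c: "c > 0" by simp
    have "shiftf p y (c *\<^sub>R d) / c \<le> shiftf p y d"
    proof (rule shiftf_ge)
      fix t :: real assume t: "t \<ge> 0"
      have "shiftf p y (c *\<^sub>R d) \<le> p (c *\<^sub>R d + (c * t) *\<^sub>R y) - (c * t) * p y"
        using shiftf_le[OF p, of "c * t"] c t by simp
      also have "p (c *\<^sub>R d + (c * t) *\<^sub>R y) = c * p (d + t *\<^sub>R y)"
        using sublin_scale[OF p, of c "d + t *\<^sub>R y"] c by (simp add: algebra_simps)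
      finally show "shiftf p y (c *\<^sub>R d) / c \<le> p (d + t *\<^sub>R y) - t * p y"
        using c by (simp add: field_simps)
    qed
    moreover have "c * shiftf p y d \<le> shiftf p y (c *\<^sub>R d)"
    proof (rule shiftf_ge)
      fix t :: real assume t: "t \<ge> 0"
      have "shiftf p y d \<le> p (d + (t / c) *\<^sub>R y) - (t / c) * p y"
        using shiftf_le[OF p, of "t / c"] c t by simp
      also have "c * p (d + (t / c) *\<^sub>R y) = p (c *\<^sub>R d + t *\<^sub>R y)"
        using sublin_scale[OF p, of c "d + (t/c) *\<^sub>R y"] c by (simp add: algebra_simps)
      ultimately show "c * shiftf p y d \<le> p (c *\<^sub>R d + t *\<^sub>R y) - t * p y"
        using c by (simp add: field_simps mult_left_mono)
    qed
    ultimately show ?thesis using c by (simp add: field_simps)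
  qed
qed

lemma shiftf_le_p: "sublin p \<Longrightarrow> shiftf p y d \<le> p d"
  using shiftf_le[of p 0 y d] by simp

lemma shiftf_neg: "sublin p \<Longrightarrow> shiftf p y (-y) \<le> - p y"
  using shiftf_le[of p 1 y "-y"] sublin_0[of p] by simp

lemma HB_basic:
  fixes p :: "'b::real_vector \<Rightarrow> real"
  assumes p: "sublin p"
  shows "\<exists>L. linear L \<and> (\<forall>x. L x \<le> p x)"
proof -
  define A where "A = {q. sublin q \<and> (\<forall>x. q x \<le> p x)}"
  define P where "P = (\<lambda>q1 q2 :: 'b \<Rightarrow> real. \<forall>x. q2 x \<le> q1 x)"
  have po: "partial_order_on A (relation_of P A)"
    unfolding partial_order_on_def preorder_on_def refl_on_def trans_def antisym_def relation_of_def P_def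
    by (auto intro!: ext intro: order_trans antisym)
  have ch: "\<exists>u \<in> A. \<forall>a \<in> C. P a u" if C: "C \<in> Chains (relation_of P A)" for C
  proof (cases "C = {}")
    case True
    then show ?thesis using p by (auto simp: A_def)
  next
    case False
    have CA: "C \<subseteq> A" using C unfolding Chains_def relation_of_def by auto
    have cmp: "P a b \<or> P b a" if "a \<in> C" "b \<in> C" for a b
      using C that unfolding Chains_def relation_of_def by auto
    have lb: "- p (-x) \<le> q x" if "q \<in> C" for q x
    proof -
      have "sublin q" "q (-x) \<le> p (-x)" using CA that by (auto simp: A_def)
      then show ?thesis using sublin_neg[of q x] by simp
    qed
    define u where "u = (\<lambda>x. Inf ((\<lambda>q. q x) ` C))"
    have bdd: "bdd_below ((\<lambda>q. q x) ` C)" for x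
      using lb by (intro bdd_belowI2) auto
    have u_le: "u x \<le> q x" if "q \<in> C" for q x
      unfolding u_def using bdd that by (intro cInf_lower) auto
    have u_ge: "c \<le> u x" if "\<And>q. q \<in> C \<Longrightarrow> c \<le> q x" for c x
      unfolding u_def using that False by (intro cInf_greatest) auto
    have "sublin u"
      unfolding sublin_def
    proof (intro conjI allI impI)
      fix x y
      have "u (x + y) \<le> q1 x + q2 y" if "q1 \<in> C" "q2 \<in> C" for q1 q2
      proof (cases "P q1 q2")
        case True
        have "u (x + y) \<le> q2 (x + y)" using u_le that by auto
        also have "\<dots> \<le> q2 x + q2 y" using CA that sublin_add[of q2] by (auto simp: A_def)
        also have "\<dots> \<le> q1 x + q2 y" using True by (auto simp: P_def)
        finally show ?thesis .
      next
        case False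
        then have "P q2 q1" using cmp that by auto
        have "u (x + y) \<le> q1 (x + y)" using u_le that by auto
        also have "\<dots> \<le> q1 x + q1 y" using CA that sublin_add[of q1] by (auto simp: A_def)
        also have "\<dots> \<le> q1 x + q2 y" using \<open>P q2 q1\<close> by (auto simp: P_def)
        finally show ?thesis .
      qed
      then have "u (x + y) - q2 y \<le> u x" if "q2 \<in> C" for q2
        using that by (intro u_ge) force
      then have "u (x + y) - u x \<le> u y"
        by (intro u_ge) force
      then show "u (x + y) \<le> u x + u y" by simp
    next
      fix c :: real and x assume c: "c \<ge> 0"
      have sc: "q (c *\<^sub>R x) = c * q x" if "q \<in> C" for q
        using CA that sublin_scale[OF _ c] by (auto simp: A_def)
      show "u (c *\<^sub>R x) = c * u x"
      proof (cases "c = 0")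
        case True
        obtain q0 where q0: "q0 \<in> C" using \<open>C \<noteq> {}\<close> by auto
        have "u 0 \<le> 0" using u_le[OF q0, of 0] sc[OF q0] True by simp
        moreover have "0 \<le> u 0"
        proof (rule u_ge)
          fix q assume "q \<in> C" then show "0 \<le> q 0" using sc[of q] True by simp
        qed
        ultimately show ?thesis using True by simp
      next
        case False
        with c have c: "c > 0" by simp
        have "u (c *\<^sub>R x) / c \<le> u x"
        proof (rule u_ge)
          fix q assume "q \<in> C"
          then show "u (c *\<^sub>R x) / c \<le> q x" using u_le[of q "c *\<^sub>R x"] sc c
            by (simp add: field_simps)
        qed
        moreover have "c * u x \<le> u (c *\<^sub>R x)"
        proof (rule u_ge)
          fix q assume "q \<in> C"
          then show "c * u x \<le> q (c *\<^sub>R x)" using u_le[of q x] sc[of q] c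
            by (simp add: mult_left_mono)
        qed
        ultimately show ?thesis using c by (simp add: field_simps)
      qed
    qed
    moreover have "u x \<le> p x" for x
    proof -
      obtain q where "q \<in> C" using False by auto
      moreover have "q x \<le> p x" using CA \<open>q \<in> C\<close> by (auto simp: A_def)
      ultimately show ?thesis using u_le[of q x] by simp
    qed
    ultimately have "u \<in> A" by (simp add: A_def)
    moreover have "\<forall>a \<in> C. P a u" using u_le by (auto simp: P_def)
    ultimately show ?thesis by blast
  qed
  obtain m where m: "m \<in> A" and mmax: "\<And>a. a \<in> A \<Longrightarrow> P m a \<Longrightarrow> a = m"
    using predicate_Zorn[OF po ch] by blast
  have ms: "sublin m" and mp: "\<And>x. m x \<le> p x" using m by (auto simp: A_def)
  have neg: "m (-y) = - m y" for y
  proof -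
    have "shiftf m y \<in> A"
      using shiftf_sublin[OF ms] shiftf_le_p[OF ms] mp by (auto simp: A_def intro: order_trans[OF _ mp])
    moreover have "P m (shiftf m y)" using shiftf_le_p[OF ms] by (auto simp: P_def)
    ultimately have "shiftf m y = m" using mmax by blast
    then have "m (-y) \<le> - m y" using shiftf_neg[OF ms, of y] by simp
    moreover have "- m (-y) \<le> m y" using sublin_neg[OF ms] .
    ultimately show ?thesis by simp
  qed
  have add: "m (x + y) = m x + m y" for x y
  proof -
    have "m x \<le> m (x + y) + m (-y)" using sublin_add[OF ms, of "x + y" "-y"] by simp
    then show ?thesis using neg[of y] sublin_add[OF ms, of x y] by simp
  qed
  have scl: "m (c *\<^sub>R x) = c * m x" for c x
  proof (cases "c \<ge> 0")
    case True then show ?thesis using sublin_scale[OF ms] by simp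
  next
    case False
    then have "m (c *\<^sub>R x) = m (- ((-c) *\<^sub>R x))" by simp
    also have "\<dots> = - m ((-c) *\<^sub>R x)" by (rule neg)
    also have "\<dots> = c * m x" using sublin_scale[OF ms, of "-c" x] False by simp
    finally show ?thesis .
  qed
  have "linear m" by (rule linearI) (simp_all add: add scl)
  then show ?thesis using mp by blast
qed

lemma HB_point:
  fixes p :: "'b::real_vector \<Rightarrow> real"
  assumes p: "sublin p"
  shows "\<exists>L. linear L \<and> (\<forall>x. L x \<le> p x) \<and> L x0 = p x0"
proof -
  obtain L where L: "linear L" "\<And>x. L x \<le> shiftf p x0 x"
    using HB_basic[OF shiftf_sublin[OF p, of x0]] by blast
  have le: "L x \<le> p x" for x using L(2)[of x] shiftf_le_p[OF p, of x0 x] by simp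
  have "L (-x0) \<le> - p x0" using L(2)[of "-x0"] shiftf_neg[OF p, of x0] by simp
  then have "L x0 \<ge> p x0" using linear_neg[OF L(1)] by simp
  then show ?thesis using le[of x0] L(1) le by (intro exI[of _ L]) auto
qed

lemma sublin_norm: "sublin (norm :: 'b::real_normed_vector \<Rightarrow> real)"
  unfolding sublin_def by (simp add: norm_triangle_ineq)

lemma norming:
  fixes x0 :: "'a::real_normed_vector"
  shows "\<exists>h::'a \<Rightarrow>\<^sub>L real. norm h \<le> 1 \<and> blinfun_apply h x0 = norm x0"
proof -
  obtain L where L: "linear L" "\<And>x. L x \<le> norm x" "L x0 = norm x0"
    using HB_point[OF sublin_norm, of x0] by blast
  have ab: "\<bar>L x\<bar> \<le> norm x" for x
    using L(2)[of x] L(2)[of "-x"] linear_neg[OF L(1), of x] by auto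
  have bl: "bounded_linear L"
    by (rule bounded_linear_intro[of L 1])
       (use L(1) ab in \<open>auto simp: linear_add linear_scale\<close>)
  show ?thesis
  proof (intro exI conjI)
    show "norm (Blinfun L) \<le> 1"
      by (rule norm_blinfun_bound) (use ab bounded_linear_Blinfun_apply[OF bl] in auto)
    show "blinfun_apply (Blinfun L) x0 = norm x0"
      using bounded_linear_Blinfun_apply[OF bl] L(3) by simp
  qed
qed

lemma open_convex_sep:
  fixes U :: "'b::real_normed_vector set"
  assumes U: "open U" "convex U" "U \<noteq> {}" "0 \<notin> U"
  shows "\<exists>L::'b \<Rightarrow> real. linear L \<and> (\<forall>u\<in>U. L u > 0)"
proof -
  obtain u0 where u0: "u0 \<in> U" using U by auto
  define Ob where "Ob = {y. u0 - y \<in> U}"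
  have oO: "open Ob"
  proof -
    have "Ob = (\<lambda>y. u0 - y) -` U" by (auto simp: Ob_def)
    moreover have "open ((\<lambda>y. u0 - y) -` U)"
      by (rule continuous_open_vimage[OF U(1)]) (intro continuous_intros)
    ultimately show ?thesis by simp
  qed
  have cO: "convex Ob"
    unfolding Ob_def convex_def
  proof (intro allI impI ballI, clarsimp)
    fix x y :: 'b and s t :: real
    assume "u0 - x \<in> U" "u0 - y \<in> U" "0 \<le> s" "0 \<le> t" "s + t = 1"
    then have "s *\<^sub>R (u0 - x) + t *\<^sub>R (u0 - y) \<in> U" using U(2) unfolding convex_def by blast
    moreover have "s *\<^sub>R (u0 - x) + t *\<^sub>R (u0 - y) = u0 - (s *\<^sub>R x + t *\<^sub>R y)"
      using \<open>s + t = 1\<close> by (simp add: algebra_simps flip: scaleR_add_left)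
    ultimately show "u0 - (s *\<^sub>R x + t *\<^sub>R y) \<in> U" by simp
  qed
  have O0: "0 \<in> Ob" using u0 by (simp add: Ob_def)
  have u0O: "u0 \<notin> Ob" using U(4) by (simp add: Ob_def)
  obtain r where r: "r > 0" "ball 0 r \<subseteq> Ob" using oO O0 open_contains_ball by blast
  define T where "T y = {t::real. t > 0 \<and> (1 / t) *\<^sub>R y \<in> Ob}" for y
  define \<mu> where "\<mu> y = Inf (T y)" for y
  have Tne: "T y \<noteq> {}" for y
  proof -
    define t where "t = 2 * norm y / r + 1"
    have "2 * norm y / r \<ge> 0" using r by simp
    then have t: "t > 0" by (simp add: t_def)
    have "r * t = 2 * norm y + r" using r by (simp add: t_def field_simps)
    then have "norm y < r * t" using r norm_ge_zero[of y] by linarith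
    then have "norm ((1 / t) *\<^sub>R y) < r" using t by (simp add: field_simps)
    then have "(1 / t) *\<^sub>R y \<in> Ob" using r by (auto simp: dist_norm)
    then show ?thesis using t by (auto simp: T_def)
  qed
  have Tbdd: "bdd_below (T y)" for y by (rule bdd_belowI[of _ 0]) (auto simp: T_def)
  have mu_le: "\<mu> y \<le> t" if "t \<in> T y" for y t unfolding \<mu>_def by (rule cInf_lower[OF that Tbdd])
  have mu_ge: "c \<le> \<mu> y" if "\<And>t. t \<in> T y \<Longrightarrow> c \<le> t" for y c
    unfolding \<mu>_def by (rule cInf_greatest[OF Tne]) (rule that)
  have mu_nonneg: "0 \<le> \<mu> y" for y by (rule mu_ge) (auto simp: T_def)
  have T_add: "t1 + t2 \<in> T (y1 + y2)" if "t1 \<in> T y1" "t2 \<in> T y2" for t1 t2 y1 y2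
  proof -
    have t: "t1 > 0" "t2 > 0" and m: "(1/t1) *\<^sub>R y1 \<in> Ob" "(1/t2) *\<^sub>R y2 \<in> Ob"
      using that by (auto simp: T_def)
    have "(t1 / (t1 + t2)) *\<^sub>R ((1/t1) *\<^sub>R y1) + (t2 / (t1 + t2)) *\<^sub>R ((1/t2) *\<^sub>R y2) \<in> Ob"
      using cO m t unfolding convex_def
      by (metis (no_types, lifting) add_divide_distrib add_pos_pos divide_nonneg_nonneg divide_self less_eq_real_def order_less_irrefl)
    moreover have "(t1 / (t1 + t2)) *\<^sub>R ((1/t1) *\<^sub>R y1) + (t2 / (t1 + t2)) *\<^sub>R ((1/t2) *\<^sub>R y2)
        = (1 / (t1 + t2)) *\<^sub>R (y1 + y2)"
      using t by (simp add: scaleR_add_right)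
    ultimately show ?thesis using t by (auto simp: T_def)
  qed
  have T_scale: "t \<in> T (c *\<^sub>R y) \<longleftrightarrow> t / c \<in> T y" if c: "c > 0" for c t y
  proof -
    have "(1 / t) *\<^sub>R (c *\<^sub>R y) = (1 / (t / c)) *\<^sub>R y" by simp
    moreover have "t > 0 \<longleftrightarrow> t / c > 0" using c by (simp add: zero_less_divide_iff)
    ultimately show ?thesis unfolding T_def by auto
  qed
  have sub: "sublin \<mu>"
    unfolding sublin_def
  proof (intro conjI allI impI)
    fix y1 y2
    have "\<mu> (y1 + y2) - t2 \<le> \<mu> y1" if "t2 \<in> T y2" for t2
      by (rule mu_ge) (use mu_le T_add that in force)
    then have "\<mu> (y1 + y2) - \<mu> y1 \<le> \<mu> y2" by (intro mu_ge) force
    then show "\<mu> (y1 + y2) \<le> \<mu> y1 + \<mu> y2" by simp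
  next
    fix c :: real and y assume c: "c \<ge> 0"
    show "\<mu> (c *\<^sub>R y) = c * \<mu> y"
    proof (cases "c = 0")
      case True
      have "\<mu> 0 \<le> e" if "e > 0" for e
        using mu_le[of e 0] that O0 by (simp add: T_def)
      then have "\<mu> 0 \<le> 0"
        by (metis dense not_le)
      then show ?thesis using True mu_nonneg[of 0] by simp
    next
      case False
      with c have c: "c > 0" by simp
      have "\<mu> (c *\<^sub>R y) / c \<le> \<mu> y"
      proof (rule mu_ge)
        fix t assume "t \<in> T y"
        then have "c * t \<in> T (c *\<^sub>R y)" using T_scale[OF c] c by simp
        then have "\<mu> (c *\<^sub>R y) \<le> c * t" by (rule mu_le)
        then show "\<mu> (c *\<^sub>R y) / c \<le> t" using c by (simp add: field_simps)
      qed
      moreover have "c * \<mu> y \<le> \<mu> (c *\<^sub>R y)"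
      proof (rule mu_ge)
        fix s assume "s \<in> T (c *\<^sub>R y)"
        then have "s / c \<in> T y" using T_scale[OF c] by simp
        then have "\<mu> y \<le> s / c" by (rule mu_le)
        then show "c * \<mu> y \<le> s" using c by (simp add: field_simps)
      qed
      ultimately show ?thesis using c by (simp add: field_simps)
    qed
  qed
  have mu_u0: "\<mu> u0 \<ge> 1"
  proof (rule mu_ge)
    fix t assume t: "t \<in> T u0"
    show "1 \<le> t"
    proof (rule ccontr)
      assume "\<not> 1 \<le> t"
      then have t1: "t < 1" "t > 0" using t by (auto simp: T_def)
      have m: "(1/t) *\<^sub>R u0 \<in> Ob" using t by (simp add: T_def)
      have "t *\<^sub>R ((1/t) *\<^sub>R u0) + (1 - t) *\<^sub>R 0 \<in> Ob"
        using cO[unfolded convex_def, rule_format, OF m O0, of t "1 - t"] t1 by simp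
      then have "u0 \<in> Ob" using t1 by simp
      then show False using u0O by simp
    qed
  qed
  have mu_O: "\<mu> y < 1" if yO: "y \<in> Ob" for y
  proof -
    obtain e where e: "e > 0" "ball y e \<subseteq> Ob" using openE[OF oO yO] by blast
    define d where "d = e / (2 * (norm y + 1))"
    have n2: "2 * (norm y + 1) > 0" by (smt (verit) norm_ge_zero)
    have d: "d > 0" unfolding d_def using e(1) n2 by simp
    have "norm (d *\<^sub>R y) < e"
    proof -
      have "norm (d *\<^sub>R y) = d * norm y" using d by simp
      also have "d * norm y = e * norm y / (2 * (norm y + 1))" by (simp add: d_def)
      also have "\<dots> < e"
      proof -
        have "norm y < 2 * (norm y + 1)" by (smt (verit) norm_ge_zero)
        then have "e * norm y < e * (2 * (norm y + 1))" using e(1) by simp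
        then show ?thesis using n2 by (simp add: divide_less_eq)
      qed
      finally show ?thesis .
    qed
    moreover have "(1 + d) *\<^sub>R y = y + d *\<^sub>R y" by (simp add: scaleR_add_left)
    moreover have "dist y (y + d *\<^sub>R y) = norm (d *\<^sub>R y)" by (simp add: dist_norm)
    ultimately have "(1 + d) *\<^sub>R y \<in> ball y e" by simp
    then have "(1 + d) *\<^sub>R y \<in> Ob" using e by blast
    then have "1 / (1 + d) \<in> T y" using d by (simp add: T_def)
    then have "\<mu> y \<le> 1 / (1 + d)" by (rule mu_le)
    also have "\<dots> < 1" using d by simp
    finally show ?thesis .
  qed
  obtain L where L: "linear L" "\<And>x. L x \<le> \<mu> x" "L u0 = \<mu> u0"
    using HB_point[OF sub, of u0] by blast
  have "L u > 0" if "u \<in> U" for u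
  proof -
    have "u0 - u \<in> Ob" using that by (simp add: Ob_def)
    then have "L (u0 - u) < 1" using L(2) mu_O by (meson le_less_trans)
    then show ?thesis using L(3) mu_u0 linear_diff[OF L(1)] by simp
  qed
  then show ?thesis using L(1) by (intro exI[of _ L]) auto
qed


lemma linear_eval: "linear (\<lambda>\<phi>::'a::real_normed_vector \<Rightarrow>\<^sub>L real. blinfun_apply \<phi> x)"
  by (rule linearI) (simp_all add: blinfun.add_left blinfun.scaleR_left)

lemma alg_span:
  fixes xs :: "'a::real_normed_vector list" and L :: "('a \<Rightarrow>\<^sub>L real) \<Rightarrow> real"
  assumes "linear L" "\<And>\<phi>. (\<forall>x\<in>set xs. blinfun_apply \<phi> x = 0) \<Longrightarrow> L \<phi> = 0"
  shows "\<exists>x. \<forall>\<phi>. L \<phi> = blinfun_apply \<phi> x"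
  using assms
proof (induction xs arbitrary: L)
  case Nil
  then show ?case by (intro exI[of _ 0]) simp
next
  case (Cons x0 xs)
  show ?case
  proof (cases "\<exists>e::'a \<Rightarrow>\<^sub>L real. (\<forall>x\<in>set xs. blinfun_apply e x = 0) \<and> blinfun_apply e x0 = 1")
    case True
    from True obtain e :: "'a \<Rightarrow>\<^sub>L real" where e: "\<forall>x\<in>set xs. blinfun_apply e x = 0" "blinfun_apply e x0 = 1" by blast
    define L' where "L' \<phi> = L \<phi> - L e * blinfun_apply \<phi> x0" for \<phi>
    have lin: "linear L'"
      unfolding L'_def
      using Cons.prems(1) linear_eval[of x0]
      by (intro linearI) (simp_all add: linear_add linear_scale algebra_simps blinfun.add_left blinfun.scaleR_left)
    have "L' \<phi> = 0" if "\<forall>x\<in>set xs. blinfun_apply \<phi> x = 0" for \<phi>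
    proof -
      define \<psi> where "\<psi> = \<phi> - blinfun_apply \<phi> x0 *\<^sub>R e"
      have "\<forall>x\<in>set (x0 # xs). blinfun_apply \<psi> x = 0"
        using that e by (simp add: \<psi>_def blinfun.diff_left blinfun.scaleR_left)
      then have "L \<psi> = 0" using Cons.prems(2) by blast
      then show ?thesis
        using Cons.prems(1) by (simp add: \<psi>_def L'_def linear_diff linear_scale)
    qed
    then obtain x' where x': "\<And>\<phi>. L' \<phi> = blinfun_apply \<phi> x'" using Cons.IH[OF lin] by blast
    show ?thesis
      by (intro exI[of _ "x' + L e *\<^sub>R x0"] allI)
         (simp add: blinfun.add_right blinfun.scaleR_right x'[symmetric] L'_def)
  next
    case False
    have "L \<phi> = 0" if "\<forall>x\<in>set xs. blinfun_apply \<phi> x = 0" for \<phi>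
    proof (cases "blinfun_apply \<phi> x0 = 0")
      case True
      then show ?thesis using that Cons.prems(2) by simp
    next
      case nz: False
      have "\<forall>x\<in>set xs. blinfun_apply ((1 / blinfun_apply \<phi> x0) *\<^sub>R \<phi>) x = 0"
           "blinfun_apply ((1 / blinfun_apply \<phi> x0) *\<^sub>R \<phi>) x0 = 1"
        using that nz by (simp_all add: blinfun.scaleR_left)
      then show ?thesis using False by blast
    qed
    then show ?thesis using Cons.IH[OF Cons.prems(1)] by blast
  qed
qed

definition wnbhd :: "('a::real_normed_vector \<Rightarrow>\<^sub>L real) \<Rightarrow> 'a list \<Rightarrow> real \<Rightarrow> ('a \<Rightarrow>\<^sub>L real) set" where
  "wnbhd a xs e = {w. \<forall>x\<in>set xs. \<bar>blinfun_apply w x - blinfun_apply a x\<bar> < e}"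

lemma wstar_open_nbhd:
  assumes "openin weak_star_topology Q" "a \<in> Q"
  shows "\<exists>xs e. e > 0 \<and> wnbhd a xs e \<subseteq> Q"
proof -
  have "generate_topology_on {{w. blinfun_apply w x \<in> U} | x U. open U} Q"
    using assms(1) unfolding weak_star_topology_def by (rule openin_topology_generated_by)
  then show ?thesis using assms(2)
  proof (induction arbitrary: a)
    case Empty then show ?case by simp
  next
    case (Int A B)
    obtain xs1 e1 where 1: "e1 > 0" "wnbhd a xs1 e1 \<subseteq> A" using Int by blast
    obtain xs2 e2 where 2: "e2 > 0" "wnbhd a xs2 e2 \<subseteq> B" using Int by blast
    have "wnbhd a (xs1 @ xs2) (min e1 e2) \<subseteq> A \<inter> B"
      using 1 2 by (auto simp: wnbhd_def)
    then show ?case using 1 2 by (intro exI[of _ "xs1 @ xs2"] exI[of _ "min e1 e2"]) auto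
  next
    case (UN K)
    then obtain k where "k \<in> K" "a \<in> k" by blast
    then show ?case using UN.IH[of k a] by blast
  next
    case (Basis s)
    then obtain x U where s: "s = {w. blinfun_apply w x \<in> U}" "open U" by blast
    then have "blinfun_apply a x \<in> U" using Basis by simp
    then obtain e where e: "e > 0" "ball (blinfun_apply a x) e \<subseteq> U"
      using s(2) open_contains_ball by blast
    have "wnbhd a [x] e \<subseteq> s"
      using e s by (auto simp: wnbhd_def dist_real_def abs_minus_commute)
    then show ?case using e by blast
  qed
qed


lemma topspace_wstar: "topspace weak_star_topology = UNIV"
proof -
  have "(UNIV :: ('a \<Rightarrow>\<^sub>L real) set) \<in> {{w. blinfun_apply w x \<in> U} | x U. open U}"
  proof -
    have "(UNIV :: ('a \<Rightarrow>\<^sub>L real) set) = {w. blinfun_apply w 0 \<in> UNIV}" by simp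
    then show ?thesis by blast
  qed
  then show ?thesis
    unfolding weak_star_topology_def topology_generated_by_topspace by blast
qed

lemma open_wnbhd: "open (wnbhd a xs e)"
proof -
  have "wnbhd a xs e = (\<Inter>x\<in>set xs. {w. \<bar>blinfun_apply w x - blinfun_apply a x\<bar> < e})"
    by (auto simp: wnbhd_def)
  moreover have "open {w::'a \<Rightarrow>\<^sub>L real. \<bar>blinfun_apply w x - blinfun_apply a x\<bar> < e}" for x
  proof -
    have "continuous_on UNIV (\<lambda>w::'a \<Rightarrow>\<^sub>L real. \<bar>blinfun_apply w x - blinfun_apply a x\<bar>)"
      by (intro continuous_intros)
    then show ?thesis by (simp add: open_Collect_less)
  qed
  ultimately show ?thesis by auto
qed

lemma convex_wnbhd: "convex (wnbhd a xs e)"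
proof (rule convexI)
  fix w1 w2 :: "'a \<Rightarrow>\<^sub>L real" and s t :: real
  assume w: "w1 \<in> wnbhd a xs e" "w2 \<in> wnbhd a xs e" and st: "0 \<le> s" "0 \<le> t" "s + t = 1"
  show "s *\<^sub>R w1 + t *\<^sub>R w2 \<in> wnbhd a xs e"
    unfolding wnbhd_def
  proof (intro CollectI ballI)
  fix x assume x: "x \<in> set xs"
  have h: "\<bar>blinfun_apply w1 x - blinfun_apply a x\<bar> < e" "\<bar>blinfun_apply w2 x - blinfun_apply a x\<bar> < e"
    "0 \<le> s" "0 \<le> t" "s + t = 1"
    using w x st by (auto simp: wnbhd_def)
  have eq: "s * blinfun_apply w1 x + t * blinfun_apply w2 x - blinfun_apply a x
      = s * (blinfun_apply w1 x - blinfun_apply a x) + t * (blinfun_apply w2 x - blinfun_apply a x)"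
  proof -
    have s: "s = 1 - t" using h(5) by simp
    show ?thesis unfolding s by (simp add: algebra_simps)
  qed
  have le: "\<bar>s * (blinfun_apply w1 x - blinfun_apply a x) + t * (blinfun_apply w2 x - blinfun_apply a x)\<bar>
     \<le> s * \<bar>blinfun_apply w1 x - blinfun_apply a x\<bar> + t * \<bar>blinfun_apply w2 x - blinfun_apply a x\<bar>"
    using h(3,4) abs_triangle_ineq[of "s * (blinfun_apply w1 x - blinfun_apply a x)" "t * (blinfun_apply w2 x - blinfun_apply a x)"]
    by (simp add: abs_mult)
  have lt: "s * \<bar>blinfun_apply w1 x - blinfun_apply a x\<bar> + t * \<bar>blinfun_apply w2 x - blinfun_apply a x\<bar> < e"
  proof (cases "s = 0")
    case True then show ?thesis using h by auto
  next
    case False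
    then have "s * \<bar>blinfun_apply w1 x - blinfun_apply a x\<bar> < s * e" using h by auto
    moreover have "t * \<bar>blinfun_apply w2 x - blinfun_apply a x\<bar> \<le> t * e"
      using h by (intro mult_left_mono) (auto intro: less_imp_le)
    moreover have "s * e + t * e = e" using h(5) by (metis distrib_right mult_1)
    ultimately show ?thesis by linarith
  qed
  show "\<bar>blinfun_apply (s *\<^sub>R w1 + t *\<^sub>R w2) x - blinfun_apply a x\<bar> < e"
    using eq le lt by (simp add: blinfun.add_left blinfun.scaleR_left)
  qed
qed

lemma wstar_sep:
  fixes C0 :: "('a::real_normed_vector \<Rightarrow>\<^sub>L real) set"
  assumes cC: "convex C0" and clC: "closedin weak_star_topology C0" and aC: "a \<notin> C0"
  shows "\<exists>x \<gamma>. \<gamma> > 0 \<and> (\<forall>w\<in>C0. blinfun_apply w x \<le> blinfun_apply a x - \<gamma>)"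
proof (cases "C0 = {}")
  case True then show ?thesis by (intro exI[of _ 0] exI[of _ 1]) auto
next
  case False
  then obtain c0 where c0: "c0 \<in> C0" by auto
  have "openin weak_star_topology (UNIV - C0)"
    using clC unfolding closedin_def topspace_wstar by simp
  then obtain xs e where e: "e > 0" "wnbhd a xs e \<subseteq> UNIV - C0"
    using wstar_open_nbhd[of "UNIV - C0" a] aC by blast
  define W where "W = wnbhd a xs e"
  have aW: "a \<in> W" using e by (simp add: W_def wnbhd_def)
  define U where "U = (\<Union>c\<in>C0. (\<lambda>w. (- c) + w) ` W)"
  have Ueq: "u \<in> U \<longleftrightarrow> (\<exists>w\<in>W. \<exists>c\<in>C0. u = w - c)" for u
    unfolding U_def by force
  have oU: "open U"
    unfolding U_def W_def by (intro open_UN ballI open_translation open_wnbhd)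
  have cU: "convex U"
    unfolding convex_def
  proof (intro ballI allI impI)
    fix u1 u2 and s t :: real
    assume "u1 \<in> U" "u2 \<in> U" and st: "0 \<le> s" "0 \<le> t" "s + t = 1"
    then obtain w1 c1 w2 c2 where w: "w1 \<in> W" "c1 \<in> C0" "u1 = w1 - c1" "w2 \<in> W" "c2 \<in> C0" "u2 = w2 - c2"
      by (auto simp: Ueq)
    have "s *\<^sub>R w1 + t *\<^sub>R w2 \<in> W"
      using convex_wnbhd[of a xs e] w st unfolding convex_def W_def by blast
    moreover have "s *\<^sub>R c1 + t *\<^sub>R c2 \<in> C0" using cC w st unfolding convex_def by blast
    moreover have "s *\<^sub>R u1 + t *\<^sub>R u2 = (s *\<^sub>R w1 + t *\<^sub>R w2) - (s *\<^sub>R c1 + t *\<^sub>R c2)"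
      unfolding w(3) w(6) by (simp add: scaleR_diff_right algebra_simps)
    ultimately show "s *\<^sub>R u1 + t *\<^sub>R u2 \<in> U" by (auto simp: Ueq)
  qed
  have "a - c0 \<in> U" using aW c0 by (auto simp: Ueq)
  then have neU: "U \<noteq> {}" by blast
  have U0: "0 \<notin> U"
  proof
    assume "0 \<in> U"
    then obtain w c where "w \<in> W" "c \<in> C0" "0 = w - c" by (auto simp: Ueq)
    then show False using e(2) by (auto simp: W_def)
  qed
  obtain L :: "('a \<Rightarrow>\<^sub>L real) \<Rightarrow> real" where L: "linear L" "\<And>u. u \<in> U \<Longrightarrow> L u > 0"
    using open_convex_sep[OF oU cU neU U0] by blast
  have Lpos: "L w - L c > 0" if "w \<in> W" "c \<in> C0" for w c
    using L(2)[of "w - c"] that linear_diff[OF L(1)] by (auto simp: Ueq)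
  have "L \<phi> = 0" if \<phi>: "\<forall>x\<in>set xs. blinfun_apply \<phi> x = 0" for \<phi>
  proof (rule ccontr)
    assume nz: "L \<phi> \<noteq> 0"
    define t where "t = - (L a - L c0) / L \<phi>"
    have "a + t *\<^sub>R \<phi> \<in> W" using aW \<phi> by (simp add: W_def wnbhd_def blinfun.add_left blinfun.scaleR_left)
    then have "L (a + t *\<^sub>R \<phi>) - L c0 > 0" using Lpos c0 by blast
    moreover have "L (a + t *\<^sub>R \<phi>) = L a + t * L \<phi>" using L(1) by (simp add: linear_add linear_scale)
    moreover have "t * L \<phi> = - (L a - L c0)" using nz by (simp add: t_def)
    ultimately show False by simp
  qed
  then obtain x where x: "\<And>\<phi>. L \<phi> = blinfun_apply \<phi> x" using alg_span[OF L(1)] by blast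
  have sepx: "blinfun_apply c x < blinfun_apply w x" if "w \<in> W" "c \<in> C0" for w c
    using Lpos[OF that] x by simp
  have x0: "x \<noteq> 0" using sepx[OF aW c0] by auto
  obtain h :: "'a \<Rightarrow>\<^sub>L real" where h: "norm h \<le> 1" "blinfun_apply h x = norm x" using norming by blast
  define S where "S = (\<Sum>y\<in>set xs. norm y)"
  have S0: "S \<ge> 0" unfolding S_def by (simp add: sum_nonneg)
  define t where "t = e / (1 + S)"
  have t: "t > 0" using e S0 by (simp add: t_def)
  have "a - t *\<^sub>R h \<in> W"
    unfolding W_def wnbhd_def
  proof (intro CollectI ballI)
    fix y assume y: "y \<in> set xs"
    have "norm h * norm y \<le> norm y" using h(1) by (intro mult_left_le_one_le) auto
    then have "\<bar>blinfun_apply h y\<bar> \<le> norm y"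
      using norm_blinfun[of h y] by simp
    also have "norm y \<le> S" unfolding S_def using y by (intro member_le_sum) auto
    finally have "t * \<bar>blinfun_apply h y\<bar> \<le> t * S" using t by (simp add: mult_left_mono)
    also have "t * S < e" using e S0 by (simp add: t_def field_simps)
    finally have "\<bar>t\<bar> * \<bar>blinfun_apply h y\<bar> < e" using t by simp
    then show "\<bar>blinfun_apply (a - t *\<^sub>R h) y - blinfun_apply a y\<bar> < e"
      by (simp add: blinfun.diff_left blinfun.scaleR_left abs_mult)
  qed
  then have "blinfun_apply c x < blinfun_apply a x - t * norm x" if "c \<in> C0" for c
    using sepx[of "a - t *\<^sub>R h" c] that h(2) by (simp add: blinfun.diff_left blinfun.scaleR_left)
  then show ?thesis using t x0 by (intro exI[of _ x] exI[of _ "t * norm x"]) (auto intro: less_imp_le)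
qed

lemma proper_not_minf: "proper_fun f \<Longrightarrow> f x \<noteq> -\<infinity>"
  unfolding proper_fun_def by blast

lemma edom_iff: "x \<in> edom f \<longleftrightarrow> f x \<noteq> \<infinity>"
  unfolding edom_def by (cases "f x") auto

lemma finite_val:
  assumes "proper_fun f" "x \<in> edom f"
  shows "f x = ereal (real_of_ereal (f x))"
  using assms proper_not_minf[OF assms(1), of x] edom_iff[of x f] by (cases "f x") auto

lemma conv_ineq:
  assumes cv: "convex_fun f" and x: "f x \<le> ereal a" and y: "f y \<le> ereal b"
    and t: "0 \<le> t" "t \<le> 1"
  shows "f ((1 - t) *\<^sub>R x + t *\<^sub>R y) \<le> ereal ((1 - t) * a + t * b)"
proof -
  have "(x, a) \<in> epigraph_e f" "(y, b) \<in> epigraph_e f" using x y by (auto simp: epigraph_e_def)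
  then have "(1 - t) *\<^sub>R (x, a) + t *\<^sub>R (y, b) \<in> epigraph_e f"
    using cv[unfolded convex_fun_def convex_def, rule_format, of "(x, a)" "(y, b)" "1 - t" t] t by simp
  then show ?thesis by (simp add: epigraph_e_def)
qed

lemma lsc_seq:
  assumes lsc: "lsc_fun f" and X: "X \<longlonglongrightarrow> x" and R: "R \<longlonglongrightarrow> r"
    and ev: "eventually (\<lambda>n. f (X n) \<le> ereal (R n)) sequentially"
  shows "f x \<le> ereal r"
proof -
  have "((\<lambda>n. (X n, R n)) \<longlongrightarrow> (x, r)) sequentially" using X R by (rule tendsto_Pair)
  moreover have "eventually (\<lambda>n. (X n, R n) \<in> epigraph_e f) sequentially"
    using ev by (simp add: epigraph_e_def)
  ultimately have "(x, r) \<in> epigraph_e f"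
    using lsc unfolding lsc_fun_def by (intro Lim_in_closed_set[of "epigraph_e f"]) auto
  then show ?thesis by (simp add: epigraph_e_def)
qed

lemma closed_sublevel_affine:
  assumes lsc: "lsc_fun f"
  shows "closed {y. f y \<le> ereal (c + blinfun_apply w y)}"
proof -
  have "{y. f y \<le> ereal (c + blinfun_apply w y)} = (\<lambda>y. (y, c + blinfun_apply w y)) -` epigraph_e f"
    by (auto simp: epigraph_e_def)
  moreover have "closed ((\<lambda>y. (y, c + blinfun_apply w y)) -` epigraph_e f)"
    using lsc unfolding lsc_fun_def
    by (rule continuous_closed_vimage) (intro continuous_intros)
  ultimately show ?thesis by simp
qed

lemma convex_sublevel_affine:
  assumes cv: "convex_fun f"
  shows "convex {y. f y \<le> ereal (c + blinfun_apply w y)}"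
proof (rule convexI)
  fix y1 y2 :: 'a and s t :: real
  assume "y1 \<in> {y. f y \<le> ereal (c + blinfun_apply w y)}" "y2 \<in> {y. f y \<le> ereal (c + blinfun_apply w y)}"
    and st: "0 \<le> s" "0 \<le> t" "s + t = 1"
  then have h: "f y1 \<le> ereal (c + blinfun_apply w y1)" "f y2 \<le> ereal (c + blinfun_apply w y2)" by auto
  have s: "s = 1 - t" using st by simp
  have "f ((1 - t) *\<^sub>R y1 + t *\<^sub>R y2) \<le> ereal ((1 - t) * (c + blinfun_apply w y1) + t * (c + blinfun_apply w y2))"
    using conv_ineq[OF cv h] st by simp
  also have "(1 - t) * (c + blinfun_apply w y1) + t * (c + blinfun_apply w y2) = c + blinfun_apply w ((1 - t) *\<^sub>R y1 + t *\<^sub>R y2)"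
    by (simp add: blinfun.add_right blinfun.diff_right blinfun.scaleR_right algebra_simps)
  finally show "s *\<^sub>R y1 + t *\<^sub>R y2 \<in> {y. f y \<le> ereal (c + blinfun_apply w y)}" using s by simp
qed

lemma closed_sublevel:
  fixes f :: "'a::real_normed_vector \<Rightarrow> ereal"
  assumes lsc: "lsc_fun f"
  shows "closed {y. f y \<le> ereal c}"
  using closed_sublevel_affine[OF lsc, of c 0] by simp

lemma loc_bdd_exists:
  fixes f :: "'a::banach \<Rightarrow> ereal"
  assumes lsc: "lsc_fun f" and int: "interior (edom f) \<noteq> {}"
  shows "\<exists>c r M. r > 0 \<and> (\<forall>y\<in>ball c r. f y \<le> ereal M)"
proof (rule ccontr)
  assume nex: "\<not> ?thesis"
  define G where "G = range (\<lambda>n::nat. {y. f y \<le> ereal (real n)})"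
  have "euclidean interior_of \<Union>G = {}"
  proof (rule Baire_category_alt)
    show "completely_metrizable_space (euclidean :: 'a topology) \<or> locally_compact_space (euclidean :: 'a topology) \<and> regular_space (euclidean :: 'a topology)"
      using completely_metrizable_space_euclidean by blast
    show "countable G" by (simp add: G_def)
    fix T assume "T \<in> G"
    then obtain n :: nat where T: "T = {y. f y \<le> ereal (real n)}" by (auto simp: G_def)
    have "closed T" unfolding T by (rule closed_sublevel[OF lsc])
    moreover have "interior T = {}"
    proof (rule ccontr)
      assume "interior T \<noteq> {}"
      then obtain c where c: "c \<in> interior T" by auto
      then obtain r where r: "r > 0" "ball c r \<subseteq> T"
        by (meson open_contains_ball_eq open_interior interior_subset subset_trans)
      then show False using nex T by blast
    qed
    ultimately show "closedin euclidean T \<and> euclidean interior_of T = {}" by simp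
  qed
  moreover have "\<Union>G = edom f"
  proof
    show "\<Union>G \<subseteq> edom f" by (auto simp: G_def edom_def)
    show "edom f \<subseteq> \<Union>G"
    proof
      fix y assume "y \<in> edom f"
      then have "f y \<noteq> \<infinity>" by (simp add: edom_iff)
      then obtain n :: nat where "f y \<le> ereal (real n)"
      proof (cases "f y")
        case (real a)
        obtain n :: nat where "a \<le> real n" using real_arch_simple by blast
        then show ?thesis using that real by auto
      next
        case MInf then show ?thesis using that by auto
      qed auto
      then show "y \<in> \<Union>G" by (auto simp: G_def)
    qed
  qed
  ultimately show False using int by simp
qed

lemma loc_bdd_int:
  fixes f :: "'a::real_normed_vector \<Rightarrow> ereal"
  assumes pr: "proper_fun f" and cv: "convex_fun f"
    and r: "r > 0" and M: "\<forall>y\<in>ball c r. f y \<le> ereal M"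
    and x: "x \<in> interior (edom f)"
  shows "\<exists>\<rho>>0. \<exists>M'. \<forall>y\<in>ball x \<rho>. f y \<le> ereal M'"
proof (cases "x = c")
  case True then show ?thesis using r M by blast
next
  case False
  obtain s where s: "s > 0" "ball x s \<subseteq> edom f" using x open_contains_ball_eq open_interior
    by (metis interior_subset subset_trans)
  define \<epsilon> where "\<epsilon> = s / (2 * norm (x - c))"
  have nxc: "norm (x - c) > 0" using False by simp
  have e: "\<epsilon> > 0" using s nxc by (simp add: \<epsilon>_def)
  define p where "p = x + \<epsilon> *\<^sub>R (x - c)"
  have "norm (p - x) = s / 2" using nxc e s(1) by (simp add: p_def \<epsilon>_def)
  then have "p \<in> edom f" using s by (auto simp: dist_norm norm_minus_commute)
  then obtain fp where fp: "f p = ereal fp" using finite_val[OF pr] by blast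
  define \<rho> where "\<rho> = r * \<epsilon> / (1 + \<epsilon>)"
  have rho: "\<rho> > 0" using r e by (simp add: \<rho>_def)
  have "f y \<le> ereal ((1 - \<epsilon> / (1 + \<epsilon>)) * fp + (\<epsilon> / (1 + \<epsilon>)) * M)" if y: "y \<in> ball x \<rho>" for y
  proof -
    define q where "q = c + ((1 + \<epsilon>) / \<epsilon>) *\<^sub>R (y - x)"
    have "norm (q - c) = ((1 + \<epsilon>) / \<epsilon>) * norm (y - x)" using e by (simp add: q_def)
    also have "\<dots> < r"
    proof -
      have "norm (y - x) < r * \<epsilon> / (1 + \<epsilon>)" using y by (simp add: \<rho>_def dist_norm norm_minus_commute)
      then have "norm (y - x) * (1 + \<epsilon>) < r * \<epsilon>" using e by (simp add: pos_less_divide_eq)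
      then show ?thesis using e by (simp add: pos_divide_less_eq mult.commute)
    qed
    finally have "q \<in> ball c r" by (simp add: dist_norm norm_minus_commute)
    then have fq: "f q \<le> ereal M" using M by blast
    have t: "0 \<le> \<epsilon> / (1 + \<epsilon>)" "\<epsilon> / (1 + \<epsilon>) \<le> 1" using e by auto
    have "(1 - \<epsilon> / (1 + \<epsilon>)) *\<^sub>R p + (\<epsilon> / (1 + \<epsilon>)) *\<^sub>R q = y"
    proof -
      have "(1 + \<epsilon>) *\<^sub>R ((1 - \<epsilon> / (1 + \<epsilon>)) *\<^sub>R p + (\<epsilon> / (1 + \<epsilon>)) *\<^sub>R q) = p + \<epsilon> *\<^sub>R q"
        using e by (simp add: scaleR_add_right field_simps)
      also have "\<dots> = (1 + \<epsilon>) *\<^sub>R y"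
      proof -
        have "\<epsilon> * ((1 + \<epsilon>) / \<epsilon>) = 1 + \<epsilon>" using e by simp
        then have "\<epsilon> *\<^sub>R q = \<epsilon> *\<^sub>R c + (1 + \<epsilon>) *\<^sub>R (y - x)"
          by (simp add: q_def scaleR_add_right)
        then show ?thesis by (simp add: p_def algebra_simps)
      qed
      finally show ?thesis using e by simp
    qed
    then show ?thesis using conv_ineq[OF cv _ fq t, of p fp] fp by simp
  qed
  then show ?thesis using rho by blast
qed

lemma usc_int:
  fixes f :: "'a::real_normed_vector \<Rightarrow> ereal"
  assumes cv: "convex_fun f" and rho: "\<rho> > 0" and M: "\<forall>y\<in>ball x \<rho>. f y \<le> ereal M"
    and fx: "f x = ereal a" and eps: "\<epsilon> > 0"
  shows "\<exists>\<delta>>0. \<forall>y. norm (y - x) < \<delta> \<longrightarrow> f y \<le> ereal (a + \<epsilon>)"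
proof -
  have "x \<in> ball x \<rho>" using rho by simp
  then have aM: "a \<le> M" using M fx by fastforce
  define \<delta> where "\<delta> = min (\<rho> / 2) (\<epsilon> * \<rho> / (2 * (M - a + 1)))"
  have d: "\<delta> > 0" using rho eps aM by (simp add: \<delta>_def)
  have "f y \<le> ereal (a + \<epsilon>)" if y: "norm (y - x) < \<delta>" for y
  proof (cases "y = x")
    case True then show ?thesis using fx eps by simp
  next
    case False
    define t where "t = 2 * norm (y - x) / \<rho>"
    have t0: "t > 0" using False rho by (simp add: t_def)
    have t1: "t \<le> 1" using y rho by (simp add: t_def \<delta>_def field_simps)
    define q where "q = x + (1 / t) *\<^sub>R (y - x)"
    have "norm (q - x) = \<rho> / 2" using t0 False rho by (simp add: q_def t_def)
    then have "q \<in> ball x \<rho>" using rho by (simp add: dist_norm norm_minus_commute)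
    then have fq: "f q \<le> ereal M" using M by blast
    have "(1 - t) *\<^sub>R x + t *\<^sub>R q = y" using t0 by (simp add: q_def scaleR_add_right algebra_simps)
    then have "f y \<le> ereal ((1 - t) * a + t * M)"
      using conv_ineq[OF cv _ fq, of x a t] fx t0 t1 by simp
    also have "(1 - t) * a + t * M = a + t * (M - a)" by (simp add: algebra_simps)
    also have "t * (M - a) \<le> \<epsilon>"
    proof -
      have "t < \<epsilon> / (M - a + 1)"
        using y rho aM eps by (simp add: t_def \<delta>_def field_simps)
      then have "t * (M - a + 1) < \<epsilon>" using aM by (simp add: field_simps)
      moreover have "t * (M - a) \<le> t * (M - a + 1)" using t0 by simp
      ultimately show ?thesis by linarith
    qed
    then have "ereal (a + t * (M - a)) \<le> ereal (a + \<epsilon>)" by simp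
    finally show ?thesis .
  qed
  then show ?thesis using d by blast
qed

lemma fconj_ge: "ereal (blinfun_apply v x) - f x \<le> fconj f v"
  unfolding fconj_def by (rule SUP_upper) simp

lemma fconj_ge_real: "f x = ereal a \<Longrightarrow> ereal (blinfun_apply v x - a) \<le> fconj f v"
  using fconj_ge[of v x f] by simp

lemma fconj_le: "(\<And>x. ereal (blinfun_apply v x) - f x \<le> c) \<Longrightarrow> fconj f v \<le> c"
  unfolding fconj_def by (rule SUP_least)

lemma fconj_not_minf:
  assumes "proper_fun f" shows "fconj f v \<noteq> -\<infinity>"
proof -
  obtain x where "f x \<noteq> \<infinity>" using assms unfolding proper_fun_def by blast
  then have "x \<in> edom f" by (simp add: edom_iff)
  then obtain a where "f x = ereal a" using finite_val[OF assms] by blast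
  then have "ereal (blinfun_apply v x - a) \<le> fconj f v" by (rule fconj_ge_real)
  then show ?thesis by auto
qed

lemma subdiffI:
  assumes "f x = ereal a" "\<And>y. ereal (a + blinfun_apply v (y - x)) \<le> f y"
  shows "v \<in> subdiff f x"
  using assms unfolding subdiff_def by auto

lemma subdiffD:
  assumes "v \<in> subdiff f x"
  obtains a where "f x = ereal a" "\<And>y. ereal (a + blinfun_apply v (y - x)) \<le> f y"
proof -
  have "f x \<noteq> \<infinity>" "f x \<noteq> -\<infinity>" "\<And>y. f y \<ge> f x + ereal (blinfun_apply v (y - x))"
    using assms unfolding subdiff_def by auto
  then show ?thesis using that by (cases "f x") auto
qed

lemma smulian:
  fixes f :: "'a::real_normed_vector \<Rightarrow> ereal"
  assumes D: "conj_frechet_deriv f u z"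
    and fy: "\<And>n. f (Y n) = ereal (fy n)"
    and A: "(\<lambda>n. real_of_ereal (fconj f u) - (blinfun_apply u (Y n) - fy n)) \<longlonglongrightarrow> 0"
  shows "Y \<longlonglongrightarrow> z"
proof -
  define F where "F w = real_of_ereal (fconj f w)" for w
  define An where "An n = F u - (blinfun_apply u (Y n) - fy n)" for n
  have ev: "eventually (\<lambda>w. fconj f w \<noteq> \<infinity> \<and> fconj f w \<noteq> -\<infinity>) (nhds u)"
    and der: "(F has_derivative (\<lambda>h. blinfun_apply h z)) (at u)"
    using D unfolding conj_frechet_deriv_def F_def by auto
  obtain d1 where d1: "d1 > 0" "\<And>w. dist w u < d1 \<Longrightarrow> fconj f w \<noteq> \<infinity> \<and> fconj f w \<noteq> -\<infinity>"
    using ev unfolding eventually_nhds_metric by blast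
  have Fge: "F w \<ge> blinfun_apply w (Y n) - fy n" if "dist w u < d1" for w n
  proof -
    have "ereal (blinfun_apply w (Y n) - fy n) \<le> fconj f w" using fconj_ge_real[where f=f and x="Y n" and a="fy n", OF fy] .
    moreover have "fconj f w = ereal (F w)" using d1(2)[OF that] unfolding F_def by (cases "fconj f w") auto
    ultimately show ?thesis by simp
  qed
  have key: "\<exists>\<rho>>0. \<forall>n. norm (Y n - z) \<le> An n / \<rho> + \<epsilon>" if eps: "\<epsilon> > 0" for \<epsilon>
  proof -
    obtain d where d: "d > 0" "\<And>w. norm (w - u) < d \<Longrightarrow>
        norm (F w - F u - blinfun_apply (w - u) z) \<le> \<epsilon> * norm (w - u)"
      using der eps unfolding has_derivative_at_alt by blast
    define \<rho> where "\<rho> = min d d1 / 2"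
    have rho: "\<rho> > 0" "\<rho> < d" "\<rho> < d1" using d d1 by (auto simp: \<rho>_def)
    have "norm (Y n - z) \<le> An n / \<rho> + \<epsilon>" for n
    proof -
      obtain h :: "'a \<Rightarrow>\<^sub>L real" where h: "norm h \<le> 1" "blinfun_apply h (Y n - z) = norm (Y n - z)"
        using norming by blast
      define w where "w = u + \<rho> *\<^sub>R h"
      have nw: "norm (w - u) \<le> \<rho>" using h(1) rho by (simp add: w_def mult_left_le_one_le)
      have Fw: "F w \<ge> blinfun_apply w (Y n) - fy n"
        using Fge[of w n] nw rho by (simp add: dist_norm)
      have Fu: "F u = An n + (blinfun_apply u (Y n) - fy n)" by (simp add: An_def)
      have "F w - F u - blinfun_apply (w - u) z \<le> \<epsilon> * norm (w - u)"
        using d(2)[of w] nw rho by (smt (verit) real_norm_def abs_le_iff)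
      also have "\<dots> \<le> \<epsilon> * \<rho>" using nw eps by (simp add: mult_left_mono)
      finally have "F w - F u - \<rho> * blinfun_apply h z \<le> \<epsilon> * \<rho>"
        by (simp add: w_def blinfun.scaleR_left)
      then have "\<rho> * blinfun_apply h (Y n) - An n - \<rho> * blinfun_apply h z \<le> \<epsilon> * \<rho>"
        using Fw Fu by (simp add: w_def blinfun.add_left blinfun.scaleR_left)
      then have "\<rho> * norm (Y n - z) \<le> An n + \<epsilon> * \<rho>"
        using h(2) by (simp add: blinfun.diff_right algebra_simps)
      then show ?thesis using rho by (simp add: field_simps)
    qed
    then show ?thesis using rho by blast
  qed
  show ?thesis
  proof (rule LIMSEQ_I)
    fix r :: real assume r: "r > 0"
    obtain \<rho> where rho: "\<rho> > 0" "\<And>n. norm (Y n - z) \<le> An n / \<rho> + r / 2"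
      using key[of "r / 2"] r by auto
    have "An = (\<lambda>n. real_of_ereal (fconj f u) - (blinfun_apply u (Y n) - fy n))"
      by (auto simp: An_def F_def)
    then have "An \<longlonglongrightarrow> 0" using A by simp
    then obtain no where no: "\<And>n. n \<ge> no \<Longrightarrow> norm (An n - 0) < \<rho> * r / 2"
      using LIMSEQ_D[of An 0 "\<rho> * r / 2"] rho r by auto
    have "norm (Y n - z) < r" if "n \<ge> no" for n
    proof -
      have "An n < \<rho> * r / 2" using no[OF that] by simp
      then have "An n / \<rho> < r / 2" using rho by (simp add: divide_less_eq mult.commute)
      then show ?thesis using rho(2)[of n] by linarith
    qed
    then show "\<exists>no. \<forall>n\<ge>no. norm (Y n - z) < r" by blast
  qed
qed

lemma part1:
  fixes f :: "'a::real_normed_vector \<Rightarrow> ereal"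
  assumes pr: "proper_fun f" and lsc: "lsc_fun f" and D: "conj_frechet_deriv f u z"
  shows "u \<in> subdiff f z"
proof -
  have "fconj f u \<noteq> \<infinity> \<and> fconj f u \<noteq> -\<infinity>"
    using D unfolding conj_frechet_deriv_def by (auto dest: eventually_nhds_x_imp_x)
  then obtain Fu where Fu: "fconj f u = ereal Fu" by (cases "fconj f u") auto
  have "\<exists>y. ereal (Fu - 1 / real (Suc n)) < ereal (blinfun_apply u y) - f y" for n
  proof -
    have "ereal (Fu - 1 / real (Suc n)) < fconj f u" using Fu by simp
    then show ?thesis unfolding fconj_def by (simp add: less_SUP_iff)
  qed
  then obtain Y where Y: "\<And>n. ereal (Fu - 1 / real (Suc n)) < ereal (blinfun_apply u (Y n)) - f (Y n)"
    by metis
  define fy where "fy n = real_of_ereal (f (Y n))" for n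
  have fyn: "f (Y n) = ereal (fy n)" for n
  proof -
    have "f (Y n) \<noteq> \<infinity>" using Y[of n] by auto
    moreover have "f (Y n) \<noteq> -\<infinity>" using proper_not_minf[OF pr] .
    ultimately show ?thesis unfolding fy_def by (cases "f (Y n)") auto
  qed
  have lo: "Fu - 1 / real (Suc n) < blinfun_apply u (Y n) - fy n" for n
    using Y[of n] fyn[of n] by simp
  have hi: "blinfun_apply u (Y n) - fy n \<le> Fu" for n
    using fconj_ge_real[where f=f and x="Y n" and a="fy n", OF fyn[of n], of u] Fu by simp
  have A: "(\<lambda>n. real_of_ereal (fconj f u) - (blinfun_apply u (Y n) - fy n)) \<longlonglongrightarrow> 0"
  proof (rule tendsto_sandwich[of "\<lambda>n. 0" _ _ "\<lambda>n. 1 / real (Suc n)"])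
    show "\<forall>\<^sub>F n in sequentially. 0 \<le> real_of_ereal (fconj f u) - (blinfun_apply u (Y n) - fy n)"
      using hi Fu by simp
    show "\<forall>\<^sub>F n in sequentially. real_of_ereal (fconj f u) - (blinfun_apply u (Y n) - fy n) \<le> 1 / real (Suc n)"
      using lo Fu by (simp add: less_imp_le algebra_simps)
    show "(\<lambda>n. 0) \<longlonglongrightarrow> (0::real)" by simp
    show "(\<lambda>n. 1 / real (Suc n)) \<longlonglongrightarrow> 0" using LIMSEQ_inverse_real_of_nat by (simp add: inverse_eq_divide)
  qed
  have Yz: "Y \<longlonglongrightarrow> z" by (rule smulian[OF D fyn A])
  have "f z \<le> ereal (blinfun_apply u z - Fu + 0)"
  proof (rule lsc_seq[OF lsc Yz])
    show "(\<lambda>n. blinfun_apply u (Y n) - Fu + 1 / real (Suc n)) \<longlonglongrightarrow> blinfun_apply u z - Fu + 0"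
      using Yz LIMSEQ_inverse_real_of_nat by (intro tendsto_intros) (simp_all add: inverse_eq_divide)
    show "\<forall>\<^sub>F n in sequentially. f (Y n) \<le> ereal (blinfun_apply u (Y n) - Fu + 1 / real (Suc n))"
      using lo fyn by (simp add: algebra_simps less_imp_le)
  qed
  then obtain fz where fz: "f z = ereal fz" "fz \<le> blinfun_apply u z - Fu"
    using proper_not_minf[OF pr, of z] by (cases "f z") auto
  show ?thesis
  proof (rule subdiffI[where f=f and x=z and a=fz, OF fz(1)])
    fix y
    show "ereal (fz + blinfun_apply u (y - z)) \<le> f y"
    proof (cases "f y")
      case (real b)
      have "blinfun_apply u y - b \<le> Fu" using fconj_ge_real[where f=f and x=y and a=b, OF real, of u] Fu by simp
      then show ?thesis using real fz(2) by (simp add: blinfun.diff_right)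
    next
      case PInf then show ?thesis by simp
    next
      case MInf then show ?thesis using proper_not_minf[OF pr] by simp
    qed
  qed
qed

lemma comb2: fixes x u v :: "'a::real_vector"
  shows "(1 - l) *\<^sub>R (x + a *\<^sub>R u) + l *\<^sub>R (x + b *\<^sub>R v) = x + ((1-l)*a) *\<^sub>R u + (l*b) *\<^sub>R v"
  by (simp add: algebra_simps)
lemma comb2': fixes x u :: "'a::real_vector"
  assumes "(1 - l) * a = l * b"
  shows "(1 - l) *\<^sub>R (x + a *\<^sub>R u) + l *\<^sub>R (x - b *\<^sub>R u) = x"
proof -
  have "(1 - l) *\<^sub>R (x + a *\<^sub>R u) + l *\<^sub>R (x - b *\<^sub>R u) = x + ((1-l)*a) *\<^sub>R u - (l*b) *\<^sub>R u"
    by (simp add: algebra_simps)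
  then show ?thesis using assms by simp
qed
lemma comb2'': fixes x u v :: "'a::real_vector"
  assumes "(1 - l) * a = t" "l * b = t"
  shows "(1 - l) *\<^sub>R (x + a *\<^sub>R u) + l *\<^sub>R (x + b *\<^sub>R v) = x + t *\<^sub>R (u + v)"
  using comb2[of l x a u b v] assms by (simp add: scaleR_add_right)

lemma subgrad_exists:
  fixes f :: "'a::real_normed_vector \<Rightarrow> ereal"
  assumes pr: "proper_fun f" and cv: "convex_fun f"
    and fx: "f x1 = ereal a"
    and rho: "\<rho> > 0" and M: "\<forall>y\<in>ball x1 \<rho>. f y \<le> ereal M"
  shows "\<exists>w. w \<in> subdiff f x1"
proof -
  define S where "S d = {(b - a) / t | t b. 0 < t \<and> f (x1 + t *\<^sub>R d) \<le> ereal b}" for d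
  define p where "p d = Inf (S d)" for d
  have aM: "a \<le> M" using M rho fx by (metis centre_in_ball ereal_less_eq(3))
  have Sne: "S d \<noteq> {}" for d
  proof -
    define t where "t = \<rho> / (2 * (norm d + 1))"
    have n2: "2 * (norm d + 1) > 0" by (smt (verit) norm_ge_zero)
    have t: "t > 0" using rho n2 by (simp add: t_def)
    have "norm (t *\<^sub>R d) = \<rho> * norm d / (2 * (norm d + 1))" using t rho by (simp add: t_def)
    also have "\<dots> < \<rho>"
    proof -
      have "norm d < 2 * (norm d + 1)" by (smt (verit) norm_ge_zero)
      then have "\<rho> * norm d < \<rho> * (2 * (norm d + 1))" using rho by simp
      then show ?thesis using n2 by (simp add: divide_less_eq)
    qed
    finally have "x1 + t *\<^sub>R d \<in> ball x1 \<rho>" by (simp add: dist_norm)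
    then have "(M - a) / t \<in> S d" using M t unfolding S_def by blast
    then show ?thesis by blast
  qed
  have Sbdd: "bdd_below (S d)" for d
  proof -
    define s where "s = \<rho> / (2 * (norm d + 1))"
    have n2: "2 * (norm d + 1) > 0" by (smt (verit) norm_ge_zero)
    have s: "s > 0" using rho n2 by (simp add: s_def)
    have "norm (s *\<^sub>R d) < \<rho>"
    proof -
      have "norm (s *\<^sub>R d) = \<rho> * norm d / (2 * (norm d + 1))" using s rho by (simp add: s_def)
      also have "\<dots> < \<rho>"
      proof -
        have "norm d < 2 * (norm d + 1)" by (smt (verit) norm_ge_zero)
        then have "\<rho> * norm d < \<rho> * (2 * (norm d + 1))" using rho by simp
        then show ?thesis using n2 by (simp add: divide_less_eq)
      qed
      finally show ?thesis .
    qed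
    then have "x1 - s *\<^sub>R d \<in> ball x1 \<rho>" by (simp add: dist_norm)
    then have fm: "f (x1 - s *\<^sub>R d) \<le> ereal M" using M by blast
    show ?thesis
    proof (rule bdd_belowI[of _ "(a - M) / s"])
      fix q assume "q \<in> S d"
      then obtain t b where q: "q = (b - a) / t" "t > 0" "f (x1 + t *\<^sub>R d) \<le> ereal b"
        unfolding S_def by blast
      define l where "l = t / (s + t)"
      have l: "0 \<le> l" "l \<le> 1" using s q(2) by (auto simp: l_def)
      have "(1 - l) *\<^sub>R (x1 + t *\<^sub>R d) + l *\<^sub>R (x1 - s *\<^sub>R d) = x1"
      proof -
        have "(1 - l) * t = l * s" using s q(2) by (simp add: l_def field_simps)
        then show ?thesis by (rule comb2')
      qed
      then have "f x1 \<le> ereal ((1 - l) * b + l * M)"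
        using conv_ineq[OF cv q(3) fm l] by simp
      then have "a \<le> (1 - l) * b + l * M" using fx by simp
      moreover have "(1 - l) * b + l * M = (s * b + t * M) / (s + t)"
      proof -
        have l1: "1 - l = s / (s + t)" using s q(2) by (simp add: l_def field_simps)
        show ?thesis unfolding l1 unfolding l_def by (simp add: add_divide_distrib mult.commute)
      qed
      ultimately have "a \<le> (s * b + t * M) / (s + t)" by simp
      then have "a * (s + t) \<le> s * b + t * M"
        using s q(2) by (simp add: le_divide_eq)
      then have "t * (a - M) \<le> s * (b - a)" by (simp add: algebra_simps)
      moreover have "b - a = q * t" using q(1,2) by simp
      ultimately have "t * (a - M) \<le> t * (s * q)" by (simp add: algebra_simps)
      then have "a - M \<le> s * q" using q(2) by simp
      then show "(a - M) / s \<le> q" using s by (simp add: divide_le_eq mult.commute)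
    qed
  qed
  have p_le: "p d \<le> (b - a) / t" if "t > 0" "f (x1 + t *\<^sub>R d) \<le> ereal b" for d t b
    unfolding p_def using that Sbdd by (intro cInf_lower) (auto simp: S_def)
  have p_ge: "c \<le> p d" if "\<And>t b. t > 0 \<Longrightarrow> f (x1 + t *\<^sub>R d) \<le> ereal b \<Longrightarrow> c \<le> (b - a) / t" for d c
    unfolding p_def using Sne that by (intro cInf_greatest) (auto simp: S_def)
  have sub: "sublin p"
    unfolding sublin_def
  proof (intro conjI allI impI)
    fix d1 d2
    have base: "p (d1 + d2) \<le> (b1 - a) / t1 + (b2 - a) / t2"
      if h: "t1 > 0" "f (x1 + t1 *\<^sub>R d1) \<le> ereal b1" "t2 > 0" "f (x1 + t2 *\<^sub>R d2) \<le> ereal b2" for t1 b1 t2 b2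
    proof -
      define t where "t = t1 * t2 / (t1 + t2)"
      define l where "l = t1 / (t1 + t2)"
      have t: "t > 0" using h by (simp add: t_def)
      have l: "0 \<le> l" "l \<le> 1" using h by (auto simp: l_def)
      have "(1 - l) *\<^sub>R (x1 + t1 *\<^sub>R d1) + l *\<^sub>R (x1 + t2 *\<^sub>R d2) = x1 + t *\<^sub>R (d1 + d2)"
      proof -
        have "(1 - l) * t1 = t" "l * t2 = t" using h by (simp_all add: l_def t_def field_simps)
        then show ?thesis by (rule comb2'')
      qed
      then have "f (x1 + t *\<^sub>R (d1 + d2)) \<le> ereal ((1 - l) * b1 + l * b2)"
        using conv_ineq[OF cv h(2) h(4) l] by simp
      then have "p (d1 + d2) \<le> ((1 - l) * b1 + l * b2 - a) / t" by (rule p_le[OF t])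
      also have "\<dots> = (b1 - a) / t1 + (b2 - a) / t2"
      proof -
        have A: "(1 - l) * b1 + l * b2 - a = (1 - l) * (b1 - a) + l * (b2 - a)" by (simp add: algebra_simps)
        have l1: "1 - l = t2 / (t1 + t2)" using h by (simp add: l_def field_simps)
        have pos: "t1 * (t1 * t2) + t1 * (t2 * t2) > 0" using h by (simp add: add_pos_pos)
        have B: "(1 - l) / t = 1 / t1" "l / t = 1 / t2"
          using h pos unfolding l1 by (simp_all add: l_def t_def field_simps)
        have "((1 - l) * (b1 - a) + l * (b2 - a)) / t = ((1 - l) / t) * (b1 - a) + (l / t) * (b2 - a)"
          by (simp add: add_divide_distrib)
        then show ?thesis unfolding A B by simp
      qed
      finally show ?thesis .
    qed
    have "p (d1 + d2) - (b2 - a) / t2 \<le> p d1" if "t2 > 0" "f (x1 + t2 *\<^sub>R d2) \<le> ereal b2" for t2 b2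
      by (rule p_ge) (use base that in force)
    then have "p (d1 + d2) - p d1 \<le> p d2" by (intro p_ge) force
    then show "p (d1 + d2) \<le> p d1 + p d2" by simp
  next
    fix c :: real and d assume c: "c \<ge> 0"
    show "p (c *\<^sub>R d) = c * p d"
    proof (cases "c = 0")
      case True
      have "p 0 \<le> (a - a) / 1" by (rule p_le) (use fx in auto)
      moreover have "0 \<le> p 0"
      proof (rule p_ge)
        fix t b assume "t > (0::real)" "f (x1 + t *\<^sub>R 0) \<le> ereal b"
        then show "0 \<le> (b - a) / t" using fx by simp
      qed
      ultimately show ?thesis using True by simp
    next
      case False
      with c have c: "c > 0" by simp
      have "p (c *\<^sub>R d) / c \<le> p d"
      proof (rule p_ge)
        fix t b assume h: "t > 0" "f (x1 + t *\<^sub>R d) \<le> ereal b"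
        have "f (x1 + (t / c) *\<^sub>R (c *\<^sub>R d)) \<le> ereal b" using h c by simp
        then have "p (c *\<^sub>R d) \<le> (b - a) / (t / c)" using h c by (intro p_le) auto
        then show "p (c *\<^sub>R d) / c \<le> (b - a) / t" using c h by (simp add: field_simps)
      qed
      moreover have "c * p d \<le> p (c *\<^sub>R d)"
      proof (rule p_ge)
        fix t b assume h: "t > 0" "f (x1 + t *\<^sub>R (c *\<^sub>R d)) \<le> ereal b"
        have "f (x1 + (c * t) *\<^sub>R d) \<le> ereal b" using h by (simp add: mult.commute)
        then have "p d \<le> (b - a) / (c * t)" using h c by (intro p_le) auto
        then show "c * p d \<le> (b - a) / t" using c h by (simp add: field_simps)
      qed
      ultimately show ?thesis using c by (simp add: field_simps)
    qed
  qed
  define K where "K = 2 * (M - a) / \<rho>"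
  have pK: "p d \<le> K * norm d" for d
  proof (cases "d = 0")
    case True
    have "p 0 = 0" using sublin_0[OF sub] .
    then show ?thesis using True by simp
  next
    case False
    define t where "t = \<rho> / (2 * norm d)"
    have t: "t > 0" using rho False by (simp add: t_def)
    have "norm (t *\<^sub>R d) = \<rho> / 2" using t False rho by (simp add: t_def)
    then have "x1 + t *\<^sub>R d \<in> ball x1 \<rho>" using rho by (simp add: dist_norm)
    then have "p d \<le> (M - a) / t" using M t by (intro p_le) auto
    also have "\<dots> = K * norm d" using False rho by (simp add: t_def K_def field_simps)
    finally show ?thesis .
  qed
  obtain L where L: "linear L" "\<And>x. L x \<le> p x" using HB_basic[OF sub] by blast
  have Lb: "\<bar>L d\<bar> \<le> K * norm d" for d
    using L(2)[of d] L(2)[of "-d"] pK[of d] pK[of "-d"] linear_neg[OF L(1), of d] by auto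
  have bl: "bounded_linear L"
    by (rule bounded_linear_intro[of L K]) (use L(1) Lb in \<open>auto simp: linear_add linear_scale mult.commute\<close>)
  define w where "w = Blinfun L"
  have wL: "blinfun_apply w = L" unfolding w_def using bounded_linear_Blinfun_apply[OF bl] .
  have "w \<in> subdiff f x1"
  proof (rule subdiffI[where f=f and x=x1 and a=a, OF fx])
    fix y
    show "ereal (a + blinfun_apply w (y - x1)) \<le> f y"
    proof (cases "f y")
      case (real b)
      have "f (x1 + 1 *\<^sub>R (y - x1)) \<le> ereal b" using real by simp
      then have "p (y - x1) \<le> (b - a) / 1" by (intro p_le) auto
      then show ?thesis using L(2)[of "y - x1"] real wL by simp
    next
      case PInf then show ?thesis by simp
    next
      case MInf then show ?thesis using proper_not_minf[OF pr] by simp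
    qed
  qed
  then show ?thesis by blast
qed

lemma key_sub:
  fixes f :: "'a::real_normed_vector \<Rightarrow> ereal"
  assumes pr: "proper_fun f" and cv: "convex_fun f" and lsc: "lsc_fun f"
    and H: "\<And>x v. x \<in> edom f \<Longrightarrow> v \<in> edom (fconj f) \<Longrightarrow>
           fitzpatrick_subdiff f x v = f x + fconj f v"
    and xi: "x \<in> interior (edom f)"
    and rho: "\<rho> > 0" and bd: "\<forall>y\<in>ball x \<rho>. f y \<le> ereal M"
    and w: "w \<in> subdiff f x"
    and D: "conj_frechet_deriv f u z"
  shows "w \<in> subdiff f z"
proof -
  obtain a where fa: "f x = ereal a" and wx: "\<And>y. ereal (a + blinfun_apply w (y - x)) \<le> f y"
    using subdiffD[OF w] by blast
  have uz: "u \<in> subdiff f z" by (rule part1[OF pr lsc D])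
  then obtain fz where fz: "f z = ereal fz" using subdiffD by blast
  have "fconj f u \<noteq> \<infinity> \<and> fconj f u \<noteq> -\<infinity>"
    using D unfolding conj_frechet_deriv_def by (auto dest: eventually_nhds_x_imp_x)
  then obtain Fu where Fu: "fconj f u = ereal Fu" by (cases "fconj f u") auto
  show ?thesis
  proof (cases "x = z")
    case True then show ?thesis using w by simp
  next
    case False
    obtain r0 where r0: "r0 > 0" "ball x r0 \<subseteq> edom f"
      using xi by (meson open_contains_ball_eq open_interior interior_subset subset_trans)
    have nxz: "norm (x - z) > 0" using False by simp
    define s where "s = r0 / (2 * norm (x - z))"
    have s: "s > 0" using r0 nxz by (simp add: s_def)
    define x' where "x' = x + s *\<^sub>R (x - z)"
    have "norm (x' - x) = r0 / 2" using nxz s r0 by (simp add: x'_def s_def)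
    then have "x' \<in> edom f" using r0 by (auto simp: dist_norm norm_minus_commute)
    then obtain a' where fa': "f x' = ereal a'" using finite_val[OF pr] by blast
    have ud: "u \<in> edom (fconj f)" using Fu by (simp add: edom_def)
    have Fz: "fitzpatrick_subdiff f x' u = ereal (a' + Fu)"
      using H[OF \<open>x' \<in> edom f\<close> ud] fa' Fu by simp
    have "\<exists>p\<in>subdiff_graph f. ereal (a' + Fu - 1 / real (Suc n)) <
        ereal (blinfun_apply u (fst p) + blinfun_apply (snd p) x' - blinfun_apply (snd p) (fst p))" for n
    proof -
      have "ereal (a' + Fu - 1 / real (Suc n)) < fitzpatrick_subdiff f x' u" using Fz by simp
      then show ?thesis unfolding fitzpatrick_subdiff_def by (simp add: less_SUP_iff)
    qed
    then obtain P where P: "\<And>n. P n \<in> subdiff_graph f"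
      "\<And>n. ereal (a' + Fu - 1 / real (Suc n)) <
        ereal (blinfun_apply u (fst (P n)) + blinfun_apply (snd (P n)) x' - blinfun_apply (snd (P n)) (fst (P n)))"
      by metis
    define Y where "Y n = fst (P n)" for n
    define W where "W n = snd (P n)" for n
    have WY: "W n \<in> subdiff f (Y n)" for n using P(1)[of n] by (auto simp: subdiff_graph_def W_def Y_def)
    define fy where "fy n = real_of_ereal (f (Y n))" for n
    have fyn: "f (Y n) = ereal (fy n)" and Wineq: "\<And>y. ereal (fy n + blinfun_apply (W n) (y - Y n)) \<le> f y" for n
    proof -
      obtain c where c: "f (Y n) = ereal c" "\<And>y. ereal (c + blinfun_apply (W n) (y - Y n)) \<le> f y"
        using subdiffD[OF WY[of n]] by blast
      show "f (Y n) = ereal (fy n)" using c(1) by (simp add: fy_def)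
      show "\<And>y. ereal (fy n + blinfun_apply (W n) (y - Y n)) \<le> f y" using c by (simp add: fy_def)
    qed
    define A where "A n = Fu - (blinfun_apply u (Y n) - fy n)" for n
    define B where "B n = a' - fy n - blinfun_apply (W n) (x' - Y n)" for n
    have A0: "A n \<ge> 0" for n
      using fconj_ge_real[where f=f and x="Y n" and a="fy n", OF fyn[of n], of u] Fu by (simp add: A_def)
    have B0: "B n \<ge> 0" for n using Wineq[of n x'] fa' by (simp add: B_def)
    have AB: "A n + B n < 1 / real (Suc n)" for n
      using P(2)[of n] by (simp add: A_def B_def Y_def W_def blinfun.diff_right)
    have inv0: "(\<lambda>n. 1 / real (Suc n)) \<longlonglongrightarrow> 0"
      using LIMSEQ_inverse_real_of_nat by (simp add: inverse_eq_divide)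
    have Ale: "A n \<le> 1 / real (Suc n)" for n using AB[of n] B0[of n] by linarith
    have Ble: "B n \<le> 1 / real (Suc n)" for n using AB[of n] A0[of n] by linarith
    have Alim: "A \<longlonglongrightarrow> 0"
    proof (rule tendsto_sandwich[of "\<lambda>n. 0" _ _ "\<lambda>n. 1 / real (Suc n)"])
      show "\<forall>\<^sub>F n in sequentially. 0 \<le> A n" using A0 by simp
      show "\<forall>\<^sub>F n in sequentially. A n \<le> 1 / real (Suc n)" using Ale by simp
    qed (use inv0 in auto)
    have Blim: "B \<longlonglongrightarrow> 0"
    proof (rule tendsto_sandwich[of "\<lambda>n. 0" _ _ "\<lambda>n. 1 / real (Suc n)"])
      show "\<forall>\<^sub>F n in sequentially. 0 \<le> B n" using B0 by simp
      show "\<forall>\<^sub>F n in sequentially. B n \<le> 1 / real (Suc n)" using Ble by simp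
    qed (use inv0 in auto)
    have Yz: "Y \<longlonglongrightarrow> z"
    proof (rule smulian[OF D fyn])
      show "(\<lambda>n. real_of_ereal (fconj f u) - (blinfun_apply u (Y n) - fy n)) \<longlonglongrightarrow> 0"
      proof -
        have "A = (\<lambda>n. real_of_ereal (fconj f u) - (blinfun_apply u (Y n) - fy n))"
          using Fu by (auto simp: A_def)
        then show ?thesis using Alim by simp
      qed
    qed
    define l where "l = 1 / (1 + s)"
    have l: "0 < l" "l < 1" using s by (auto simp: l_def)
    have ls: "l * s = 1 - l" using s by (simp add: l_def field_simps)
    define X where "X n = (1 - l) *\<^sub>R Y n + l *\<^sub>R x'" for n
    have xx: "(1 - l) *\<^sub>R z + l *\<^sub>R x' = x"
    proof -
      have "(1 - l) *\<^sub>R z + l *\<^sub>R x' = (1 - l) *\<^sub>R z + l *\<^sub>R x + (l * s) *\<^sub>R x - (l * s) *\<^sub>R z"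
        by (simp add: x'_def algebra_simps)
      also have "\<dots> = x" unfolding ls by (simp add: algebra_simps)
      finally show ?thesis .
    qed
    have Xx: "X \<longlonglongrightarrow> x"
    proof -
      have "X \<longlonglongrightarrow> (1 - l) *\<^sub>R z + l *\<^sub>R x'" unfolding X_def using Yz by (intro tendsto_intros)
      then show ?thesis using xx by simp
    qed
    have fX: "ereal ((1 - l) * fy n + l * a' - l * B n) \<le> f (X n)" for n
    proof -
      have "X n - Y n = l *\<^sub>R (x' - Y n)" by (simp add: X_def algebra_simps)
      then have "blinfun_apply (W n) (X n - Y n) = l * blinfun_apply (W n) (x' - Y n)"
        by (simp add: blinfun.scaleR_right)
      then have "fy n + blinfun_apply (W n) (X n - Y n) = (1 - l) * fy n + l * a' - l * B n"
        by (simp add: B_def algebra_simps)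
      then show ?thesis using Wineq[of n "X n"] by simp
    qed
    have main: "(1 - l) * fz + l * a' \<le> a + \<epsilon>" if eps: "\<epsilon> > 0" for \<epsilon>
    proof -
      obtain \<delta> where d: "\<delta> > 0" "\<And>y. norm (y - x) < \<delta> \<Longrightarrow> f y \<le> ereal (a + \<epsilon>)"
        using usc_int[OF cv rho bd fa eps] by blast
      have evX: "eventually (\<lambda>n. norm (X n - x) < \<delta>) sequentially"
        using Xx d(1) unfolding LIMSEQ_iff eventually_sequentially by auto
      have "f z \<le> ereal ((a + \<epsilon> - l * a' + l * 0) / (1 - l))"
      proof (rule lsc_seq[OF lsc Yz])
        show "(\<lambda>n. (a + \<epsilon> - l * a' + l * B n) / (1 - l)) \<longlonglongrightarrow> (a + \<epsilon> - l * a' + l * 0) / (1 - l)"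
          using Blim l by (intro tendsto_intros) auto
        show "\<forall>\<^sub>F n in sequentially. f (Y n) \<le> ereal ((a + \<epsilon> - l * a' + l * B n) / (1 - l))"
        proof (rule eventually_mono[OF evX])
          fix n assume "norm (X n - x) < \<delta>"
          then have "f (X n) \<le> ereal (a + \<epsilon>)" by (rule d(2))
          then have "(1 - l) * fy n + l * a' - l * B n \<le> a + \<epsilon>" using fX[of n] by (meson ereal_less_eq(3) order_trans)
          then have "(1 - l) * fy n \<le> a + \<epsilon> - l * a' + l * B n" by simp
          then have "fy n \<le> (a + \<epsilon> - l * a' + l * B n) / (1 - l)" using l by (simp add: le_divide_eq mult.commute)
          then show "f (Y n) \<le> ereal ((a + \<epsilon> - l * a' + l * B n) / (1 - l))" using fyn by simp
        qed
      qed
      then have "fz \<le> (a + \<epsilon> - l * a') / (1 - l)" using fz by simp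
      then have "(1 - l) * fz \<le> a + \<epsilon> - l * a'" using l by (simp add: le_divide_eq mult.commute)
      then show ?thesis by simp
    qed
    have comb: "(1 - l) * fz + l * a' \<le> a" by (rule field_le_epsilon) (rule main)
    have T1: "fz \<ge> a + blinfun_apply w (z - x)" using wx[of z] fz by simp
    have T2: "a' \<ge> a + blinfun_apply w (x' - x)" using wx[of x'] fa' by simp
    have wx': "blinfun_apply w (x' - x) = s * blinfun_apply w (x - z)"
      by (simp add: x'_def blinfun.scaleR_right)
    have wzx: "blinfun_apply w (z - x) = - blinfun_apply w (x - z)"
      using blinfun.minus_right[of w "x - z"] by simp
    have "(1 - l) * (fz - a - blinfun_apply w (z - x)) + l * (a' - a - blinfun_apply w (x' - x))
        = (1 - l) * fz + l * a' - a"
    proof -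
      define c where "c = blinfun_apply w (x - z)"
      have "l * (s * c) = (1 - l) * c" using ls by (simp add: mult.assoc[symmetric])
      then have "(1 - l) * (- c) + l * (s * c) = 0" by simp
      then have "(1 - l) * blinfun_apply w (z - x) + l * blinfun_apply w (x' - x) = 0"
        unfolding wx' wzx c_def .
      then show ?thesis by (simp add: algebra_simps)
    qed
    then have "(1 - l) * (fz - a - blinfun_apply w (z - x)) \<le> - (l * (a' - a - blinfun_apply w (x' - x)))"
      using comb by linarith
    also have "\<dots> \<le> 0" using T2 l by simp
    finally have "fz - a - blinfun_apply w (z - x) \<le> 0" using l by (simp add: mult_le_0_iff)
    then have fz_le: "fz \<le> a + blinfun_apply w (z - x)" by simp
    show ?thesis
    proof (rule subdiffI[where f=f and x=z and a=fz, OF fz])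
      fix y
      have "fz + blinfun_apply w (y - z) \<le> a + blinfun_apply w (y - x)"
        using fz_le by (simp add: blinfun.diff_right)
      then show "ereal (fz + blinfun_apply w (y - z)) \<le> f y"
        using wx[of y] by (meson ereal_less_eq(3) order_trans)
    qed
  qed
qed

lemma convex_edom:
  assumes pr: "proper_fun f" and cv: "convex_fun f"
  shows "convex (edom f)"
proof (rule convexI)
  fix y1 y2 and s t :: real
  assume y: "y1 \<in> edom f" "y2 \<in> edom f" and st: "0 \<le> s" "0 \<le> t" "s + t = 1"
  obtain b1 b2 where b: "f y1 = ereal b1" "f y2 = ereal b2" using y finite_val[OF pr] by blast
  have "f ((1 - t) *\<^sub>R y1 + t *\<^sub>R y2) \<le> ereal ((1 - t) * b1 + t * b2)"
    using conv_ineq[OF cv _ _ st(2), of y1 b1 y2 b2] b st by simp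
  moreover have "s = 1 - t" using st by simp
  ultimately show "s *\<^sub>R y1 + t *\<^sub>R y2 \<in> edom f" by (auto simp: edom_def)
qed

lemma loc_bdd_at:
  fixes f :: "'a::banach \<Rightarrow> ereal"
  assumes pr: "proper_fun f" and cv: "convex_fun f" and lsc: "lsc_fun f"
    and int: "interior (edom f) \<noteq> {}" and x: "x \<in> interior (edom f)"
  shows "\<exists>\<rho>>0. \<exists>M. \<forall>y\<in>ball x \<rho>. f y \<le> ereal M"
proof -
  obtain c r M where "r > 0" "\<forall>y\<in>ball c r. f y \<le> ereal M" using loc_bdd_exists[OF lsc int] by blast
  then show ?thesis using loc_bdd_int[OF pr cv _ _ x] by blast
qed

lemma interior_subdiff_nonempty:
  fixes f :: "'a::banach \<Rightarrow> ereal"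
  assumes pr: "proper_fun f" and cv: "convex_fun f" and lsc: "lsc_fun f"
    and int: "interior (edom f) \<noteq> {}" and x: "x \<in> interior (edom f)"
  shows "\<exists>w. w \<in> subdiff f x"
proof -
  obtain \<rho> M where b: "\<rho> > 0" "\<forall>y\<in>ball x \<rho>. f y \<le> ereal M" using loc_bdd_at[OF assms] by blast
  have "x \<in> edom f" using x interior_subset by blast
  then obtain a where "f x = ereal a" using finite_val[OF pr] by blast
  then show ?thesis using subgrad_exists[OF pr cv _ b] by blast
qed

lemma S_sub_K:
  fixes f :: "'a::banach \<Rightarrow> ereal"
  assumes pr: "proper_fun f" and cv: "convex_fun f" and lsc: "lsc_fun f"
    and int: "interior (edom f) \<noteq> {}"
    and H: "\<And>x v. x \<in> edom f \<Longrightarrow> v \<in> edom (fconj f) \<Longrightarrow>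
           fitzpatrick_subdiff f x v = f x + fconj f v"
    and x: "x \<in> interior (edom f)" and w: "w \<in> subdiff f x"
    and xh: "xh \<in> closure (convex hull (im_Dconj f))"
  shows "w \<in> subdiff f xh"
proof -
  obtain \<rho> M where b: "\<rho> > 0" "\<forall>y\<in>ball x \<rho>. f y \<le> ereal M"
    using loc_bdd_at[OF pr cv lsc int x] by blast
  have wz: "w \<in> subdiff f z" if zi: "z \<in> im_Dconj f" for z
  proof -
    obtain u where "conj_frechet_deriv f u z" using zi by (auto simp: im_Dconj_def)
    then show ?thesis using key_sub[OF pr cv lsc H x b w] by blast
  qed
  have "im_Dconj f \<noteq> {}" using xh by auto
  then obtain z0 where z0: "z0 \<in> im_Dconj f" by blast
  obtain fz0 where fz0: "f z0 = ereal fz0" "\<And>y. ereal (fz0 + blinfun_apply w (y - z0)) \<le> f y"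
    using subdiffD[OF wz[OF z0]] by blast
  define c where "c = fz0 - blinfun_apply w z0"
  define Z where "Z = {y. f y \<le> ereal (c + blinfun_apply w y)}"
  have "im_Dconj f \<subseteq> Z"
  proof
    fix z assume z: "z \<in> im_Dconj f"
    obtain e where e: "f z = ereal e" "\<And>y. ereal (e + blinfun_apply w (y - z)) \<le> f y"
      using subdiffD[OF wz[OF z]] by blast
    have "e + blinfun_apply w (z0 - z) \<le> fz0" using e(2)[of z0] fz0(1) by simp
    then have "e \<le> c + blinfun_apply w z" by (simp add: c_def blinfun.diff_right)
    then show "z \<in> Z" using e(1) by (simp add: Z_def)
  qed
  moreover have "convex Z" unfolding Z_def by (rule convex_sublevel_affine[OF cv])
  moreover have "closed Z" unfolding Z_def by (rule closed_sublevel_affine[OF lsc])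
  ultimately have "closure (convex hull (im_Dconj f)) \<subseteq> Z"
    by (meson closure_minimal hull_minimal)
  then have "xh \<in> Z" using xh by blast
  then have le: "f xh \<le> ereal (c + blinfun_apply w xh)" by (simp add: Z_def)
  then obtain e where e: "f xh = ereal e" "e \<le> c + blinfun_apply w xh"
    using proper_not_minf[OF pr, of xh] by (cases "f xh") auto
  show ?thesis
  proof (rule subdiffI[where f=f and x=xh and a=e, OF e(1)])
    fix y
    have "e + blinfun_apply w (y - xh) \<le> fz0 + blinfun_apply w (y - z0)"
      using e(2) by (simp add: c_def blinfun.diff_right)
    then show "ereal (e + blinfun_apply w (y - xh)) \<le> f y"
      using fz0(2)[of y] by (meson ereal_less_eq(3) order_trans)
  qed
qed

lemma subdiff_convex: "convex (subdiff f x)"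
proof (rule convexI)
  fix v1 v2 and s t :: real
  assume v: "v1 \<in> subdiff f x" "v2 \<in> subdiff f x" and st: "0 \<le> s" "0 \<le> t" "s + t = 1"
  obtain a where a: "f x = ereal a" "\<And>y. ereal (a + blinfun_apply v1 (y - x)) \<le> f y"
    using subdiffD[OF v(1)] by blast
  obtain a2 where a2: "f x = ereal a2" "\<And>y. ereal (a2 + blinfun_apply v2 (y - x)) \<le> f y"
    using subdiffD[OF v(2)] by blast
  have aa: "a2 = a" using a a2 by simp
  show "s *\<^sub>R v1 + t *\<^sub>R v2 \<in> subdiff f x"
  proof (rule subdiffI[where f=f and x=x and a=a, OF a(1)])
    fix y
    show "ereal (a + blinfun_apply (s *\<^sub>R v1 + t *\<^sub>R v2) (y - x)) \<le> f y"
    proof (cases "f y")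
      case (real b)
      have "a + blinfun_apply v1 (y - x) \<le> b" "a + blinfun_apply v2 (y - x) \<le> b"
        using a(2)[of y] a2(2)[of y] aa real by auto
      then have "s * (a + blinfun_apply v1 (y - x)) + t * (a + blinfun_apply v2 (y - x)) \<le> s * b + t * b"
        using st by (intro add_mono mult_left_mono) auto
      moreover have "s * (a + blinfun_apply v1 (y - x)) + t * (a + blinfun_apply v2 (y - x))
          = a + blinfun_apply (s *\<^sub>R v1 + t *\<^sub>R v2) (y - x)"
      proof -
        have s: "s = 1 - t" using st by simp
        show ?thesis unfolding s by (simp add: blinfun.add_left blinfun.diff_left blinfun.scaleR_left algebra_simps)
      qed
      moreover have "s * b + t * b = b"
      proof -
        have s: "s = 1 - t" using st by simp
        show ?thesis unfolding s by (simp add: algebra_simps)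
      qed
      ultimately have "a + blinfun_apply (s *\<^sub>R v1 + t *\<^sub>R v2) (y - x) \<le> b" by simp
      then show ?thesis using real by simp
    next
      case MInf then show ?thesis using a(2)[of y] by simp
    qed auto
  qed
qed

lemma subdiff_wclosed: "closedin weak_star_topology (subdiff f x)"
proof (cases "\<exists>a. f x = ereal a")
  case False
  then have "subdiff f x = {}" unfolding subdiff_def by (cases "f x") auto
  then show ?thesis by simp
next
  case True
  then obtain a where a: "f x = ereal a" by blast
  define C where "C y = {v. ereal (a + blinfun_apply v (y - x)) \<le> f y}" for y
  have eq: "UNIV - subdiff f x = (\<Union>y. UNIV - C y)"
    unfolding C_def subdiff_def using a by auto
  have "openin weak_star_topology (UNIV - C y)" for y
  proof (cases "f y")
    case (real b)
    have "UNIV - C y = {v. blinfun_apply v (y - x) \<in> {b - a<..}}"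
      using real by (auto simp: C_def)
    also have "openin weak_star_topology \<dots>"
      unfolding weak_star_topology_def
      by (rule topology_generated_by_Basis) (blast intro: open_greaterThan)
    finally show ?thesis .
  next
    case PInf
    have "UNIV - C y = {}" using PInf by (auto simp: C_def)
    then show ?thesis by (simp only: openin_empty)
  next
    case MInf
    have "UNIV - C y = UNIV" using MInf by (auto simp: C_def)
    then show ?thesis using openin_topspace[of weak_star_topology] unfolding topspace_wstar by simp
  qed
  then have "openin weak_star_topology (UNIV - subdiff f x)"
    unfolding eq by (intro openin_Union) auto
  then show ?thesis unfolding closedin_def topspace_wstar by simp
qed

lemma V_sub:
  assumes "\<And>w. w \<in> S \<Longrightarrow> w \<in> subdiff f x"
  shows "weak_star_closed_convex_hull S \<subseteq> subdiff f x"
  unfolding weak_star_closed_convex_hull_def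
  using assms subdiff_convex[of f x] subdiff_wclosed[of f x] by blast

lemma part2:
  fixes f :: "'a::banach \<Rightarrow> ereal"
  assumes pr: "proper_fun f" and cv: "convex_fun f" and lsc: "lsc_fun f"
    and int: "interior (edom f) \<noteq> {}"
    and H: "\<And>x v. x \<in> edom f \<Longrightarrow> v \<in> edom (fconj f) \<Longrightarrow>
           fitzpatrick_subdiff f x v = f x + fconj f v"
    and xh: "xh \<in> closure (convex hull (im_Dconj f))"
    and v: "v \<in> subdiff f xh"
  shows "\<exists>a b. a \<in> weak_star_closed_convex_hull (\<Union>x\<in>interior (edom f). subdiff f x)
           \<and> b \<in> normal_cone (edom f) xh \<and> v = a + b"
proof -
  define S where "S = (\<Union>x\<in>interior (edom f). subdiff f x)"
  have SK: "w \<in> subdiff f xh" if "w \<in> S" for w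
    using that S_sub_K[OF pr cv lsc int H _ _ xh] by (auto simp: S_def)
  obtain e where e: "f xh = ereal e" and vineq: "\<And>y. ereal (e + blinfun_apply v (y - xh)) \<le> f y"
    using subdiffD[OF v] by blast
  have xhC: "xh \<in> edom f" using e by (simp add: edom_def)
  obtain x1 where x1: "x1 \<in> interior (edom f)" using int by blast
  obtain r1 where r1: "r1 > 0" "ball x1 r1 \<subseteq> interior (edom f)"
    using x1 open_interior open_contains_ball_eq by blast
  have cC: "convex (edom f)" by (rule convex_edom[OF pr cv])
  have cI: "convex (interior (edom f))" using cC by (rule convex_interior)
  obtain w1 where w1: "w1 \<in> subdiff f x1" using interior_subdiff_nonempty[OF pr cv lsc int x1] by blast
  have Sne: "S \<noteq> {}" using w1 x1 by (auto simp: S_def)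
  define Bd where "Bd d = bdd_above ((\<lambda>w. blinfun_apply w d) ` S)" for d
  define \<sigma> where "\<sigma> d = Sup ((\<lambda>w. blinfun_apply w d) ` S)" for d
  have sig_up: "blinfun_apply w d \<le> \<sigma> d" if "Bd d" "w \<in> S" for w d
    using that unfolding Bd_def \<sigma>_def by (intro cSup_upper) auto
  have sig_le: "\<sigma> d \<le> c" if "\<And>w. w \<in> S \<Longrightarrow> blinfun_apply w d \<le> c" for d c
    unfolding \<sigma>_def using Sne that by (intro cSup_least) auto
  have Bd_I: "Bd d" if "\<And>w. w \<in> S \<Longrightarrow> blinfun_apply w d \<le> c" for d c
    unfolding Bd_def using that by (intro bdd_aboveI2) auto
  have Bd_edom: "Bd (y - xh) \<and> \<sigma> (y - xh) \<le> real_of_ereal (f y) - e" if y: "y \<in> edom f" for y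
  proof -
    obtain b where b: "f y = ereal b" using finite_val[OF pr y] by blast
    have "blinfun_apply w (y - xh) \<le> b - e" if wS: "w \<in> S" for w
    proof -
      obtain e' where "f xh = ereal e'" "\<And>y. ereal (e' + blinfun_apply w (y - xh)) \<le> f y"
        using subdiffD[OF SK[OF wS]] by blast
      then show ?thesis using e b by (metis ereal_less_eq(3) le_diff_eq add.commute ereal.inject)
    qed
    then show ?thesis using b by (auto intro: Bd_I sig_le)
  qed
  have Bd_scale: "Bd (c *\<^sub>R d) \<and> \<sigma> (c *\<^sub>R d) = c * \<sigma> d" if "Bd d" "c \<ge> 0" for c d
  proof -
    have up: "blinfun_apply w (c *\<^sub>R d) \<le> c * \<sigma> d" if "w \<in> S" for w
      using sig_up[OF \<open>Bd d\<close> that] \<open>c \<ge> 0\<close> by (simp add: blinfun.scaleR_right mult_left_mono)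
    then have B: "Bd (c *\<^sub>R d)" by (rule Bd_I)
    have "\<sigma> (c *\<^sub>R d) \<le> c * \<sigma> d" by (rule sig_le) (rule up)
    moreover have "c * \<sigma> d \<le> \<sigma> (c *\<^sub>R d)"
    proof (cases "c = 0")
      case True
      obtain w where "w \<in> S" using Sne by blast
      then show ?thesis using sig_up[OF B \<open>w \<in> S\<close>] True by simp
    next
      case False
      then have c: "c > 0" using that by simp
      have "\<sigma> d \<le> \<sigma> (c *\<^sub>R d) / c"
      proof (rule sig_le)
        fix w assume "w \<in> S"
        then have "blinfun_apply w (c *\<^sub>R d) \<le> \<sigma> (c *\<^sub>R d)" by (rule sig_up[OF B])
        then show "blinfun_apply w d \<le> \<sigma> (c *\<^sub>R d) / c"
          using c by (simp add: blinfun.scaleR_right le_divide_eq mult.commute)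
      qed
      then show ?thesis using c by (simp add: le_divide_eq mult.commute)
    qed
    ultimately show ?thesis using B by simp
  qed
  have Bd_add: "Bd (d1 + d2) \<and> \<sigma> (d1 + d2) \<le> \<sigma> d1 + \<sigma> d2" if "Bd d1" "Bd d2" for d1 d2
  proof -
    have up: "blinfun_apply w (d1 + d2) \<le> \<sigma> d1 + \<sigma> d2" if "w \<in> S" for w
      using sig_up[OF \<open>Bd d1\<close> that] sig_up[OF \<open>Bd d2\<close> that] by (simp add: blinfun.add_right)
    then show ?thesis by (auto intro: Bd_I sig_le)
  qed
  have sig_int: "blinfun_apply v (y - xh) \<le> \<sigma> (y - xh)" if y: "y \<in> interior (edom f)" for y
  proof -
    obtain wy where wy: "wy \<in> subdiff f y" using interior_subdiff_nonempty[OF pr cv lsc int y] by blast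
    have wyS: "wy \<in> S" using wy y by (auto simp: S_def)
    obtain b where b: "f y = ereal b" "\<And>z. ereal (b + blinfun_apply wy (z - y)) \<le> f z"
      using subdiffD[OF wy] by blast
    have "b + blinfun_apply wy (xh - y) \<le> e" using b(2)[of xh] e by simp
    then have "b - e \<le> blinfun_apply wy (y - xh)"
      using blinfun.minus_right[of wy "y - xh"] by simp
    moreover have "e + blinfun_apply v (y - xh) \<le> b" using vineq[of y] b(1) by simp
    moreover have "y \<in> edom f" using y interior_subset by blast
    ultimately show ?thesis using sig_up[of "y - xh" wy] Bd_edom wyS by fastforce
  qed
  define P0 where "P0 = {t *\<^sub>R (y - xh) | t y. 0 \<le> t \<and> y \<in> interior (edom f)}"
  have P0_Bd: "Bd e0 \<and> blinfun_apply v e0 \<le> \<sigma> e0" if e0P: "e0 \<in> P0" for e0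
  proof -
    obtain t y where ty: "e0 = t *\<^sub>R (y - xh)" "0 \<le> t" "y \<in> interior (edom f)"
      using e0P by (auto simp: P0_def)
    have yC: "y \<in> edom f" using ty(3) interior_subset by blast
    have B: "Bd (y - xh)" using Bd_edom[OF yC] by blast
    have "blinfun_apply v e0 = t * blinfun_apply v (y - xh)" using ty by (simp add: blinfun.scaleR_right)
    also have "\<dots> \<le> t * \<sigma> (y - xh)" using sig_int[OF ty(3)] ty(2) by (simp add: mult_left_mono)
    also have "\<dots> = \<sigma> e0" using Bd_scale[OF B ty(2)] ty(1) by simp
    finally show ?thesis using Bd_scale[OF B ty(2)] ty(1) by simp
  qed
  have P00: "0 \<in> P0" using x1 unfolding P0_def by (intro CollectI exI[of _ 0] exI[of _ x1]) simp
  have P0_scale: "c *\<^sub>R e0 \<in> P0" if e0P: "e0 \<in> P0" and c0: "c \<ge> 0" for c e0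
  proof -
    obtain t y where ty: "e0 = t *\<^sub>R (y - xh)" "0 \<le> t" "y \<in> interior (edom f)"
      using e0P by (auto simp: P0_def)
    then show ?thesis using c0 unfolding P0_def
      by (intro CollectI exI[of _ "c * t"] exI[of _ y]) simp
  qed
  have P0_add: "e1 + e2 \<in> P0" if e12: "e1 \<in> P0" "e2 \<in> P0" for e1 e2
  proof -
    obtain t1 y1 where 1: "e1 = t1 *\<^sub>R (y1 - xh)" "0 \<le> t1" "y1 \<in> interior (edom f)"
      using e12(1) by (auto simp: P0_def)
    obtain t2 y2 where 2: "e2 = t2 *\<^sub>R (y2 - xh)" "0 \<le> t2" "y2 \<in> interior (edom f)"
      using e12(2) by (auto simp: P0_def)
    show ?thesis
    proof (cases "t1 + t2 = 0")
      case True
      then have "t1 = 0" "t2 = 0" using 1 2 by auto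
      then show ?thesis using P00 1 2 by simp
    next
      case False
      then have T: "t1 + t2 > 0" using 1 2 by simp
      define y' where "y' = (t1 / (t1 + t2)) *\<^sub>R y1 + (t2 / (t1 + t2)) *\<^sub>R y2"
      have "y' \<in> interior (edom f)"
        using cI 1(2,3) 2(2,3) T unfolding y'_def convex_def
        by (simp add: add_divide_distrib[symmetric])
      moreover have "(t1 + t2) *\<^sub>R (y' - xh) = e1 + e2"
      proof -
        have c1: "(t1 + t2) * (t1 / (t1 + t2)) = t1" "(t1 + t2) * (t2 / (t1 + t2)) = t2" using T by simp_all
        then have "(t1 + t2) *\<^sub>R y' = t1 *\<^sub>R y1 + t2 *\<^sub>R y2" by (simp add: y'_def scaleR_add_right)
        then show ?thesis by (simp add: scaleR_diff_right 1(1) 2(1) algebra_simps)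
      qed
      ultimately show ?thesis unfolding P0_def using T
        by (intro CollectI exI[of _ "t1 + t2"] exI[of _ y']) simp
    qed
  qed
  define I where "I d = {e0. e0 \<in> P0 \<and> Bd (d + e0)}" for d
  define p where "p d = Inf ((\<lambda>e0. \<sigma> (d + e0) - blinfun_apply v e0) ` I d)" for d
  have x1C: "x1 \<in> edom f" using x1 interior_subset by blast
  have Bx1: "Bd (x1 - xh)" using Bd_edom[OF x1C] by blast
  have shift: "(x1 - (1 / t) *\<^sub>R d) \<in> interior (edom f) \<and> t *\<^sub>R ((x1 - (1 / t) *\<^sub>R d) - xh) \<in> I d
       \<and> d + t *\<^sub>R ((x1 - (1 / t) *\<^sub>R d) - xh) = t *\<^sub>R (x1 - xh)"
    if t: "t > 0" "norm d < r1 * t" for d t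
  proof -
    have "norm ((1 / t) *\<^sub>R d) < r1" using t by (simp add: divide_less_eq mult.commute)
    then have yi: "x1 - (1 / t) *\<^sub>R d \<in> interior (edom f)" using r1 by (auto simp: dist_norm)
    have eq: "d + t *\<^sub>R ((x1 - (1 / t) *\<^sub>R d) - xh) = t *\<^sub>R (x1 - xh)"
      using t by (simp add: algebra_simps)
    have "t *\<^sub>R ((x1 - (1 / t) *\<^sub>R d) - xh) \<in> P0" using yi t unfolding P0_def
      by (intro CollectI exI[of _ t] exI[of _ "x1 - (1 / t) *\<^sub>R d"]) simp
    moreover have "Bd (t *\<^sub>R (x1 - xh))" using Bd_scale[OF Bx1] t by simp
    ultimately show ?thesis using yi eq by (simp add: I_def)
  qed
  have Ine: "I d \<noteq> {}" for d
  proof -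
    define t where "t = 2 * norm d / r1 + 1"
    have t: "t > 0" using r1 by (simp add: t_def add_nonneg_pos)
    have "r1 * t = 2 * norm d + r1" using r1 by (simp add: t_def field_simps)
    then have "norm d < r1 * t" using r1 norm_ge_zero[of d] by linarith
    then show ?thesis using shift[OF t] by blast
  qed
  have Qbdd: "bdd_below ((\<lambda>e0. \<sigma> (d + e0) - blinfun_apply v e0) ` I d)" for d
  proof -
    obtain e' where e': "e' \<in> I (-d)" using Ine by blast
    show ?thesis
    proof (rule bdd_belowI2[of _ "blinfun_apply v e' - \<sigma> (-d + e')"])
      fix e0 assume e0: "e0 \<in> I d"
      have B1: "Bd (d + e0)" "e0 \<in> P0" using e0 by (auto simp: I_def)
      have B2: "Bd (-d + e')" "e' \<in> P0" using e' by (auto simp: I_def)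
      have "\<sigma> ((d + e0) + (-d + e')) \<le> \<sigma> (d + e0) + \<sigma> (-d + e')" using Bd_add[OF B1(1) B2(1)] by blast
      moreover have "(d + e0) + (-d + e') = e0 + e'" by simp
      moreover have "blinfun_apply v (e0 + e') \<le> \<sigma> (e0 + e')" using P0_Bd[OF P0_add[OF B1(2) B2(2)]] by blast
      ultimately show "blinfun_apply v e' - \<sigma> (-d + e') \<le> \<sigma> (d + e0) - blinfun_apply v e0"
        by (simp add: blinfun.add_right)
    qed
  qed
  have p_le: "p d \<le> \<sigma> (d + e0) - blinfun_apply v e0" if "e0 \<in> I d" for d e0
    unfolding p_def using Qbdd that by (intro cInf_lower) auto
  have p_ge: "c \<le> p d" if "\<And>e0. e0 \<in> I d \<Longrightarrow> c \<le> \<sigma> (d + e0) - blinfun_apply v e0" for c d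
    unfolding p_def using Ine that by (intro cInf_greatest) auto
  have sub: "sublin p"
    unfolding sublin_def
  proof (intro conjI allI impI)
    fix d1 d2
    have base: "p (d1 + d2) \<le> (\<sigma> (d1 + e1) - blinfun_apply v e1) + (\<sigma> (d2 + e2) - blinfun_apply v e2)"
      if "e1 \<in> I d1" "e2 \<in> I d2" for e1 e2
    proof -
      have h: "e1 \<in> P0" "Bd (d1 + e1)" "e2 \<in> P0" "Bd (d2 + e2)" using that by (auto simp: I_def)
      have eq: "(d1 + d2) + (e1 + e2) = (d1 + e1) + (d2 + e2)" by (simp add: algebra_simps)
      have "Bd ((d1 + d2) + (e1 + e2))" unfolding eq using Bd_add[OF h(2,4)] by blast
      then have "e1 + e2 \<in> I (d1 + d2)" using P0_add[OF h(1,3)] by (simp add: I_def)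
      then have "p (d1 + d2) \<le> \<sigma> ((d1 + d2) + (e1 + e2)) - blinfun_apply v (e1 + e2)" by (rule p_le)
      also have "\<dots> \<le> (\<sigma> (d1 + e1) - blinfun_apply v e1) + (\<sigma> (d2 + e2) - blinfun_apply v e2)"
        unfolding eq using Bd_add[OF h(2,4)] by (simp add: blinfun.add_right)
      finally show ?thesis .
    qed
    have "p (d1 + d2) - (\<sigma> (d2 + e2) - blinfun_apply v e2) \<le> p d1" if "e2 \<in> I d2" for e2
      by (rule p_ge) (use base that in force)
    then have "p (d1 + d2) - p d1 \<le> p d2" by (intro p_ge) force
    then show "p (d1 + d2) \<le> p d1 + p d2" by simp
  next
    fix c :: real and d assume c: "c \<ge> 0"
    show "p (c *\<^sub>R d) = c * p d"
    proof (cases "c = 0")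
      case True
      have B0: "Bd 0" using P0_Bd[OF P00] by blast
      have s0: "\<sigma> 0 = 0" using Bd_scale[OF B0, of 0] by simp
      have "0 \<in> I 0" using P00 B0 by (simp add: I_def)
      then have "p 0 \<le> \<sigma> (0 + 0) - blinfun_apply v 0" by (rule p_le)
      then have "p 0 \<le> 0" using s0 by simp
      moreover have "0 \<le> p 0"
      proof (rule p_ge)
        fix e0 assume "e0 \<in> I 0"
        then show "0 \<le> \<sigma> (0 + e0) - blinfun_apply v e0" using P0_Bd by (auto simp: I_def)
      qed
      ultimately show ?thesis using True by simp
    next
      case False
      with c have c: "c > 0" by simp
      have "p (c *\<^sub>R d) / c \<le> p d"
      proof (rule p_ge)
        fix e0 assume e0: "e0 \<in> I d"
        then have h: "e0 \<in> P0" "Bd (d + e0)" by (auto simp: I_def)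
        have eqc: "c *\<^sub>R d + c *\<^sub>R e0 = c *\<^sub>R (d + e0)" by (simp add: scaleR_add_right)
        have BS: "Bd (c *\<^sub>R (d + e0))" "\<sigma> (c *\<^sub>R (d + e0)) = c * \<sigma> (d + e0)"
          using Bd_scale[OF h(2), of c] c by auto
        have "Bd (c *\<^sub>R d + c *\<^sub>R e0)" unfolding eqc by (rule BS(1))
        then have "c *\<^sub>R e0 \<in> I (c *\<^sub>R d)"
          unfolding I_def using P0_scale[OF h(1), of c] c by simp
        then have "p (c *\<^sub>R d) \<le> \<sigma> (c *\<^sub>R d + c *\<^sub>R e0) - blinfun_apply v (c *\<^sub>R e0)" by (rule p_le)
        also have "\<dots> = c * (\<sigma> (d + e0) - blinfun_apply v e0)"
          unfolding eqc BS(2) by (simp add: blinfun.scaleR_right right_diff_distrib)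
        finally show "p (c *\<^sub>R d) / c \<le> \<sigma> (d + e0) - blinfun_apply v e0"
          using c by (simp add: divide_le_eq mult.commute)
      qed
      moreover have "c * p d \<le> p (c *\<^sub>R d)"
      proof (rule p_ge)
        fix e0 assume e0: "e0 \<in> I (c *\<^sub>R d)"
        then have h: "e0 \<in> P0" "Bd (c *\<^sub>R d + e0)" by (auto simp: I_def)
        have eq: "d + (1 / c) *\<^sub>R e0 = (1 / c) *\<^sub>R (c *\<^sub>R d + e0)" using c by (simp add: scaleR_add_right)
        have BS: "Bd ((1 / c) *\<^sub>R (c *\<^sub>R d + e0))" "\<sigma> ((1 / c) *\<^sub>R (c *\<^sub>R d + e0)) = (1 / c) * \<sigma> (c *\<^sub>R d + e0)"
          using Bd_scale[OF h(2), of "1 / c"] c by auto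
        have "Bd (d + (1 / c) *\<^sub>R e0)" unfolding eq by (rule BS(1))
        then have "(1 / c) *\<^sub>R e0 \<in> I d"
          unfolding I_def using P0_scale[OF h(1), of "1 / c"] c by simp
        then have "p d \<le> \<sigma> (d + (1 / c) *\<^sub>R e0) - blinfun_apply v ((1 / c) *\<^sub>R e0)" by (rule p_le)
        also have "\<dots> = (1 / c) * (\<sigma> (c *\<^sub>R d + e0) - blinfun_apply v e0)"
          unfolding eq BS(2) by (simp add: blinfun.scaleR_right right_diff_distrib)
        finally show "c * p d \<le> \<sigma> (c *\<^sub>R d + e0) - blinfun_apply v e0"
          using c by (simp add: le_divide_eq mult.commute)
      qed
      ultimately show ?thesis using c by (simp add: field_simps)
    qed
  qed
  define C1 where "C1 = \<sigma> (x1 - xh) - blinfun_apply v (x1 - xh)"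
  define K where "K = 2 * \<bar>C1\<bar> / r1 + norm v"
  have pK: "p d \<le> K * norm d" for d
  proof (cases "d = 0")
    case True then show ?thesis using sublin_0[OF sub] by simp
  next
    case False
    define t where "t = 2 * norm d / r1"
    have t: "t > 0" using False r1 by (simp add: t_def)
    have "norm d < r1 * t" using False r1 by (simp add: t_def)
    then have sh: "t *\<^sub>R ((x1 - (1 / t) *\<^sub>R d) - xh) \<in> I d"
      "d + t *\<^sub>R ((x1 - (1 / t) *\<^sub>R d) - xh) = t *\<^sub>R (x1 - xh)" using shift[OF t] by blast+
    have "p d \<le> \<sigma> (t *\<^sub>R (x1 - xh)) - blinfun_apply v (t *\<^sub>R ((x1 - (1 / t) *\<^sub>R d) - xh))"
      using p_le[OF sh(1)] sh(2) by simp
    also have "\<dots> = t * C1 + blinfun_apply v d"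
    proof -
      have vec: "t *\<^sub>R ((x1 - (1 / t) *\<^sub>R d) - xh) = t *\<^sub>R (x1 - xh) - d" using t by (simp add: algebra_simps)
      have s1: "\<sigma> (t *\<^sub>R (x1 - xh)) = t * \<sigma> (x1 - xh)" using Bd_scale[OF Bx1, of t] t by auto
      show ?thesis unfolding vec s1 by (simp add: blinfun.diff_right blinfun.add_right blinfun.scaleR_right C1_def algebra_simps)
    qed
    also have "\<dots> \<le> t * \<bar>C1\<bar> + norm v * norm d"
    proof -
      have "blinfun_apply v d \<le> norm v * norm d" using norm_blinfun[of v d] by simp
      moreover have "t * C1 \<le> t * \<bar>C1\<bar>" using t by (simp add: mult_left_mono)
      ultimately show ?thesis by simp
    qed
    also have "\<dots> = K * norm d" using r1 by (simp add: t_def K_def algebra_simps)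
    finally show ?thesis .
  qed
  obtain L where L: "linear L" "\<And>x. L x \<le> p x" using HB_basic[OF sub] by blast
  have Lb: "\<bar>L d\<bar> \<le> K * norm d" for d
    using L(2)[of d] L(2)[of "-d"] pK[of d] pK[of "-d"] linear_neg[OF L(1), of d] by auto
  have bl: "bounded_linear L"
    by (rule bounded_linear_intro[of L K]) (use L(1) Lb in \<open>auto simp: linear_add linear_scale mult.commute\<close>)
  define a where "a = Blinfun L"
  have aL: "blinfun_apply a = L" unfolding a_def using bounded_linear_Blinfun_apply[OF bl] .
  have B0: "Bd 0" using P0_Bd[OF P00] by blast
  have s0: "\<sigma> 0 = 0" using Bd_scale[OF B0, of 0] by simp
  have a_int: "blinfun_apply v (y - xh) \<le> blinfun_apply a (y - xh)" if y: "y \<in> interior (edom f)" for y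
  proof -
    have "y - xh \<in> P0" using y unfolding P0_def by (intro CollectI exI[of _ 1] exI[of _ y]) simp
    then have "y - xh \<in> I (-(y - xh))" using B0 by (simp add: I_def)
    then have "p (-(y - xh)) \<le> \<sigma> (-(y - xh) + (y - xh)) - blinfun_apply v (y - xh)" by (rule p_le)
    then have "L (-(y - xh)) \<le> - blinfun_apply v (y - xh)" using L(2)[of "-(y - xh)"] s0 by simp
    then show ?thesis using linear_neg[OF L(1), of "y - xh"] aL by simp
  qed
  have bN: "v - a \<in> normal_cone (edom f) xh"
    unfolding normal_cone_def
  proof (intro CollectI conjI ballI xhC)
    fix y assume y: "y \<in> edom f"
    define g where "g z = blinfun_apply (v - a) z" for z
    have glin: "g (z1 + t *\<^sub>R z2) = g z1 + t * g z2" for z1 z2 t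
      by (simp add: g_def blinfun.add_right blinfun.scaleR_right)
    have gt: "g (y - xh) + t * g (x1 - y) \<le> 0" if t: "0 < t" "t \<le> 1" for t
    proof -
      define yt where "yt = y + t *\<^sub>R (x1 - y)"
      have "ball yt (t * r1) \<subseteq> edom f"
      proof
        fix q assume q: "q \<in> ball yt (t * r1)"
        define q' where "q' = x1 + (1 / t) *\<^sub>R (q - yt)"
        have "norm ((1 / t) *\<^sub>R (q - yt)) < r1"
          using q t by (simp add: dist_norm norm_minus_commute divide_less_eq mult.commute)
        then have "q' \<in> ball x1 r1" by (simp add: q'_def dist_norm)
        then have q'C: "q' \<in> edom f" using r1 interior_subset by blast
        have "q = (1 - t) *\<^sub>R y + t *\<^sub>R q'"
          using t by (simp add: q'_def yt_def algebra_simps)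
        then show "q \<in> edom f"
          using cC y q'C t unfolding convex_def by (metis diff_add_cancel diff_ge_0_iff_ge le_add_same_cancel2 less_imp_le)
      qed
      then have "yt \<in> interior (edom f)" using t r1 by (meson interior_maximal mult_pos_pos open_ball centre_in_ball subsetD)
      then have "blinfun_apply v (yt - xh) \<le> blinfun_apply a (yt - xh)" by (rule a_int)
      then have "g (yt - xh) \<le> 0" by (simp add: g_def blinfun.diff_left)
      moreover have "yt - xh = (y - xh) + t *\<^sub>R (x1 - y)" by (simp add: yt_def algebra_simps)
      ultimately show ?thesis using glin by simp
    qed
    show "blinfun_apply (v - a) (y - xh) \<le> 0"
    proof (rule ccontr)
      assume "\<not> blinfun_apply (v - a) (y - xh) \<le> 0"
      then have pos: "g (y - xh) > 0" by (simp add: g_def)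
      define t where "t = min 1 (g (y - xh) / (2 * (\<bar>g (x1 - y)\<bar> + 1)))"
      have den: "2 * (\<bar>g (x1 - y)\<bar> + 1) > 0" by (smt (verit) abs_ge_zero)
      have t: "0 < t" "t \<le> 1" using pos den by (auto simp: t_def)
      have "t * \<bar>g (x1 - y)\<bar> \<le> g (y - xh) / 2"
      proof -
        have "t \<le> g (y - xh) / (2 * (\<bar>g (x1 - y)\<bar> + 1))" by (simp add: t_def)
        then have "t * (2 * (\<bar>g (x1 - y)\<bar> + 1)) \<le> g (y - xh)" using den by (simp add: le_divide_eq)
        moreover have "t * \<bar>g (x1 - y)\<bar> \<le> t * (\<bar>g (x1 - y)\<bar> + 1)" using t by simp
        ultimately show ?thesis by linarith
      qed
      moreover have "- (t * \<bar>g (x1 - y)\<bar>) \<le> t * g (x1 - y)" using t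
        by (metis abs_ge_minus_self abs_mult abs_of_pos minus_le_iff mult_minus_right)
      ultimately have "g (y - xh) + t * g (x1 - y) > 0" using pos by linarith
      then show False using gt[OF t] by simp
    qed
  qed
  have aV: "a \<in> weak_star_closed_convex_hull S"
    unfolding weak_star_closed_convex_hull_def
  proof (intro InterI, clarify)
    fix C0 assume C0: "convex C0" "closedin weak_star_topology C0" "S \<subseteq> C0"
    show "a \<in> C0"
    proof (rule ccontr)
      assume "a \<notin> C0"
      then obtain x \<gamma> where sep: "\<gamma> > 0" "\<And>w. w \<in> C0 \<Longrightarrow> blinfun_apply w x \<le> blinfun_apply a x - \<gamma>"
        using wstar_sep[OF C0(1,2)] by blast
      have upS: "blinfun_apply w x \<le> blinfun_apply a x - \<gamma>" if "w \<in> S" for w using sep(2) C0(3) that by blast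
      have Bx: "Bd x" using upS by (rule Bd_I)
      have sx: "\<sigma> x \<le> blinfun_apply a x - \<gamma>" using upS by (rule sig_le)
      have "0 \<in> I x" using P00 Bx by (simp add: I_def)
      then have "p x \<le> \<sigma> (x + 0) - blinfun_apply v 0" by (rule p_le)
      then have "L x \<le> \<sigma> x" using L(2)[of x] by simp
      then show False using sx sep(1) aL by simp
    qed
  qed
  show ?thesis
    using aV bN unfolding S_def by (intro exI[of _ a] exI[of _ "v - a"]) simp
qed

lemma add_normal:
  assumes a: "a \<in> subdiff f x" and b: "b \<in> normal_cone (edom f) x"
  shows "a + b \<in> subdiff f x"
proof -
  obtain e where e: "f x = ereal e" "\<And>y. ereal (e + blinfun_apply a (y - x)) \<le> f y"
    using subdiffD[OF a] by blast
  have bn: "\<And>y. y \<in> edom f \<Longrightarrow> blinfun_apply b (y - x) \<le> 0" using b by (auto simp: normal_cone_def)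
  show ?thesis
  proof (rule subdiffI[where f=f and x=x and a=e, OF e(1)])
    fix y
    show "ereal (e + blinfun_apply (a + b) (y - x)) \<le> f y"
    proof (cases "y \<in> edom f")
      case True
      have "e + blinfun_apply (a + b) (y - x) \<le> e + blinfun_apply a (y - x)"
        using bn[OF True] by (simp add: blinfun.add_left)
      then show ?thesis using e(2)[of y] by (meson ereal_less_eq(3) order_trans)
    next
      case False
      then show ?thesis by (simp add: edom_iff)
    qed
  qed
qed

lemma subdiff_conj_dom:
  assumes v: "v \<in> subdiff f x"
  shows "v \<in> edom (fconj f)"
proof -
  obtain e where e: "f x = ereal e" "\<And>y. ereal (e + blinfun_apply v (y - x)) \<le> f y"
    using subdiffD[OF v] by blast
  have "fconj f v \<le> ereal (blinfun_apply v x - e)"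
  proof (rule fconj_le)
    fix y
    show "ereal (blinfun_apply v y) - f y \<le> ereal (blinfun_apply v x - e)"
    proof (cases "f y")
      case (real b)
      then have "e + blinfun_apply v (y - x) \<le> b" using e(2)[of y] by simp
      then show ?thesis using real by (simp add: blinfun.diff_right)
    next
      case PInf then show ?thesis by simp
    next
      case MInf then show ?thesis using e(2)[of y] by simp
    qed
  qed
  then show ?thesis by (auto simp: edom_def)
qed

theorem lemma4p5:
  fixes f :: "'a::banach \<Rightarrow> ereal"
  assumes "proper_fun f" and "convex_fun f" and "lsc_fun f"
    and "interior (edom f) \<noteq> {}"
    and "dom_Dconj f \<noteq> {}"
    and "\<And>x v. x \<in> edom f \<Longrightarrow> v \<in> edom (fconj f) \<Longrightarrow>
           fitzpatrick_subdiff f x v = f x + fconj f v"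
  shows "let K = closure (convex hull (im_Dconj f));
             V = weak_star_closed_convex_hull (\<Union>x\<in>interior (edom f). subdiff f x);
             N = (\<Union>xh\<in>K. normal_cone (edom f) xh);
             dK = (\<Union>xh\<in>K. subdiff f xh)
         in dom_Dconj f \<subseteq> dK \<and> dK = {a + b | a b. a \<in> V \<and> b \<in> N}
            \<and> {a + b | a b. a \<in> V \<and> b \<in> N} \<subseteq> edom (fconj f)"
proof -
  note pr = assms(1) and cv = assms(2) and lsc = assms(3) and int = assms(4) and H = assms(6)
  define K where "K = closure (convex hull (im_Dconj f))"
  define V where "V = weak_star_closed_convex_hull (\<Union>x\<in>interior (edom f). subdiff f x)"
  define N where "N = (\<Union>xh\<in>K. normal_cone (edom f) xh)"
  define dK where "dK = (\<Union>xh\<in>K. subdiff f xh)"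
  have imK: "im_Dconj f \<subseteq> K" unfolding K_def
    by (rule order_trans[OF hull_subset closure_subset])
  have p1: "dom_Dconj f \<subseteq> dK"
  proof
    fix u assume "u \<in> dom_Dconj f"
    then obtain z where D: "conj_frechet_deriv f u z" by (auto simp: dom_Dconj_def)
    then have "z \<in> K" using imK by (auto simp: im_Dconj_def)
    moreover have "u \<in> subdiff f z" by (rule part1[OF pr lsc D])
    ultimately show "u \<in> dK" by (auto simp: dK_def)
  qed
  have p2: "dK \<subseteq> {a + b | a b. a \<in> V \<and> b \<in> N}"
  proof
    fix v assume "v \<in> dK"
    then obtain xh where xh: "xh \<in> K" "v \<in> subdiff f xh" by (auto simp: dK_def)
    obtain a b where ab: "a \<in> V" "b \<in> normal_cone (edom f) xh" "v = a + b"
      using part2[OF pr cv lsc int H _ xh(2)] xh(1) unfolding K_def V_def by blast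
    then have "b \<in> N" using xh(1) by (auto simp: N_def)
    then show "v \<in> {a + b | a b. a \<in> V \<and> b \<in> N}" using ab by blast
  qed
  have p3: "{a + b | a b. a \<in> V \<and> b \<in> N} \<subseteq> dK"
  proof
    fix v assume "v \<in> {a + b | a b. a \<in> V \<and> b \<in> N}"
    then obtain a b xh where ab: "v = a + b" "a \<in> V" "xh \<in> K" "b \<in> normal_cone (edom f) xh"
      by (auto simp: N_def)
    have "V \<subseteq> subdiff f xh"
      unfolding V_def
    proof (rule V_sub)
      fix w assume "w \<in> (\<Union>x\<in>interior (edom f). subdiff f x)"
      then obtain x where "x \<in> interior (edom f)" "w \<in> subdiff f x" by blast
      then show "w \<in> subdiff f xh" using S_sub_K[OF pr cv lsc int H] ab(3) unfolding K_def by blast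
    qed
    then have "a + b \<in> subdiff f xh" using add_normal ab by blast
    then show "v \<in> dK" using ab by (auto simp: dK_def)
  qed
  have p4: "{a + b | a b. a \<in> V \<and> b \<in> N} \<subseteq> edom (fconj f)"
  proof
    fix v assume "v \<in> {a + b | a b. a \<in> V \<and> b \<in> N}"
    then have "v \<in> dK" using p3 by blast
    then obtain xh where "v \<in> subdiff f xh" by (auto simp: dK_def)
    then show "v \<in> edom (fconj f)" by (rule subdiff_conj_dom)
  qed
  have "dom_Dconj f \<subseteq> dK \<and> dK = {a + b | a b. a \<in> V \<and> b \<in> N}
            \<and> {a + b | a b. a \<in> V \<and> b \<in> N} \<subseteq> edom (fconj f)"
    using p1 p2 p3 p4 by (intro conjI equalityI) assumption+
  then show ?thesis
    unfolding Let_def K_def V_def N_def dK_def .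
qed

end
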